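(* Let $T_t$ be the special flow over the dyadic odometer on $M=[0,1)^2$ with Lebesgue measure $m$ (defined in the context). For each $n\in\mathbb{N}$ let $f_n:[0,2^{-n})\times[0,2^n)\to\mathbb{R}$ be measurable with $f_n\circ\Phi_n^{-1}\in L_1(M)$, such that (2) $\int_0^{2^n} f_n(u,v)\,dv=0$ for every $u\in[0,2^{-n})$, and (3) $\sum_{n=1}^\infty \|f_n\|_{\infty,1}<\infty$, where $\|f_n\|_{\infty,1}=\sup_{u\in[0,2^{-n})}\int_0^{2^n}|f_n(u,v)|\,dv$. Define $f(x,y)=\sum_{n=1}^\infty f_n(\Phi_n^{-1}(x,y))$. Then $f\in L_1(M)$, $\int_M f\,dm=0$, and for all $t>0$ and almost every $(x,y)\in M$, $$|A(f,t,(x,y))|\le \frac{2\sum_{n=1}^\infty\|f_n\|_{\infty,1}}{t}.$$ In particular $A(f,t,\cdot)\to 0$ uniformly with rate $\mathcal{O}(1/t)$.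
   Context: Dyadic odometer: $S:[0,1)\to[0,1)$ defined on $x=\sum_{i\ge1}x_i2^{-i}$ (binary expansion, $x_i\in\{0,1\}$, not eventually all $1$) by: if $x_1=\dots=x_m=1$ and $x_{m+1}=0$ ($m\ge0$), then $S$ replaces these first $m+1$ digits by $0,\dots,0,1$ and leaves the remaining digits unchanged. It preserves Lebesgue measure and is ergodic. The special flow over $S$ with constant return time $1$ is the flow on $M=[0,1)\times[0,1)$ given by $T_t(x,y)=(S^{\lfloor y+t\rfloor}x,\ y+t-\lfloor y+t\rfloor)$, $t\ge 0$; it preserves Lebesgue measure $m$ on $M$. For $p\in\mathbb{N}$, the map $\Phi_p:[0,2^{-p})\times[0,2^p)\to M$, $\Phi_p(u,v)=T_v(u,0)=(S^{\lfloor v\rfloor}u,\ v-\lfloor v\rfloor)$, is a measure-preserving bijection (mod 0); the coordinates $(x_p,y_p)=\Phi_p^{-1}(x,y)$ identify $M$ with the rectangle $[0,2^{-p})\times[0,2^p)$. Birkhoff average: $A(f,t,z)=\frac1t\int_0^t f(T_sz)\,ds$. *)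

theory Defs
  imports "HOL-Analysis.Analysis"
begin

text \<open>Binary digits x_i (i \<ge> 1) of x in [0,1), standard expansion (not eventually all 1).\<close>
definition bdigit :: "nat \<Rightarrow> real \<Rightarrow> nat" where
  "bdigit i x = nat \<lfloor>2 ^ i * x\<rfloor> mod 2"

definition lead_ones :: "real \<Rightarrow> nat" where
  "lead_ones x = (LEAST m. bdigit (Suc m) x = 0)"

definition odo_digit :: "real \<Rightarrow> nat \<Rightarrow> nat" where
  "odo_digit x i = (if i \<le> lead_ones x then 0
                    else if i = Suc (lead_ones x) then 1 else bdigit i x)"

definition odometer :: "real \<Rightarrow> real" where
  "odometer x = (\<Sum>i. real (odo_digit x (Suc i)) / 2 ^ Suc i)"

definition Msp :: "(real \<times> real) set" where
  "Msp = {0..<1} \<times> {0..<1}"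

text \<open>Special flow over S with constant roof 1 (for t \<ge> 0).\<close>
definition flow :: "real \<Rightarrow> real \<times> real \<Rightarrow> real \<times> real" where
  "flow t z = (case z of (x, y) \<Rightarrow>
      ((odometer ^^ nat \<lfloor>y + t\<rfloor>) x, y + t - of_int \<lfloor>y + t\<rfloor>))"

definition Rect :: "nat \<Rightarrow> (real \<times> real) set" where
  "Rect p = {0..<1 / 2 ^ p} \<times> {0..<2 ^ p}"

definition Phi :: "nat \<Rightarrow> real \<times> real \<Rightarrow> real \<times> real" where
  "Phi p z = (case z of (u, v) \<Rightarrow>
      ((odometer ^^ nat \<lfloor>v\<rfloor>) u, v - of_int \<lfloor>v\<rfloor>))"

definition Phi_inv :: "nat \<Rightarrow> real \<times> real \<Rightarrow> real \<times> real" where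
  "Phi_inv p = inv_into (Rect p) (Phi p)"

definition birkhoff_avg :: "(real \<times> real \<Rightarrow> real) \<Rightarrow> real \<Rightarrow> real \<times> real \<Rightarrow> real" where
  "birkhoff_avg f t z = (integral\<^sup>L (lebesgue_on {0..t}) (\<lambda>s. f (flow s z))) / t"

definition norm_inf_1 :: "nat \<Rightarrow> (real \<times> real \<Rightarrow> real) \<Rightarrow> ennreal" where
  "norm_inf_1 n g = (SUP u \<in> {0..<1 / 2 ^ n}.
      \<integral>\<^sup>+ v. ennreal \<bar>g (u, v)\<bar> \<partial>(lebesgue_on {0..<2 ^ n}))"

end

theory Submission
  imports Defs
begin

lemma bdigit_le1: "bdigit i x \<le> 1"
  unfolding bdigit_def by simp

lemma floor_Suc_digit:
  assumes "x \<ge> 0"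
  shows "\<lfloor>2 ^ Suc n * x\<rfloor> = 2 * \<lfloor>2 ^ n * x\<rfloor> + int (bdigit (Suc n) x)"
proof -
  define k where "k = \<lfloor>2 ^ n * x\<rfloor>"
  have k0: "k \<ge> 0" using assms unfolding k_def by simp
  have a: "of_int k \<le> 2 ^ n * x" "2 ^ n * x < of_int k + 1" unfolding k_def by linarith+
  have e: "2 ^ Suc n * x = 2 * (2 ^ n * x)" by simp
  have "\<lfloor>2 ^ Suc n * x\<rfloor> = 2 * k \<or> \<lfloor>2 ^ Suc n * x\<rfloor> = 2 * k + 1"
    unfolding e using a by linarith
  moreover have "int (bdigit (Suc n) x) = \<lfloor>2 ^ Suc n * x\<rfloor> mod 2"
    unfolding bdigit_def using assms by (simp add: nat_mod_distrib[symmetric] zmod_int)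
  ultimately show ?thesis unfolding k_def[symmetric] by auto
qed

lemma partial_digits:
  assumes "0 \<le> x" "x < 1"
  shows "(\<Sum>i<n. real (bdigit (Suc i) x) / 2 ^ Suc i) = \<lfloor>2 ^ n * x\<rfloor> / 2 ^ n"
proof (induction n)
  case 0
  then show ?case using assms by (simp add: floor_eq_iff)
next
  case (Suc n)
  have "(\<Sum>i<Suc n. real (bdigit (Suc i) x) / 2 ^ Suc i)
      = \<lfloor>2 ^ n * x\<rfloor> / 2 ^ n + real (bdigit (Suc n) x) / 2 ^ Suc n"
    using Suc by simp
  also have "\<dots> = (2 * \<lfloor>2 ^ n * x\<rfloor> + int (bdigit (Suc n) x)) / 2 ^ Suc n"
    by (simp add: field_simps)
  also have "\<dots> = \<lfloor>2 ^ Suc n * x\<rfloor> / 2 ^ Suc n"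
    using floor_Suc_digit[of x n] assms by simp
  finally show ?case .
qed

lemma digits_sums:
  assumes "0 \<le> x" "x < 1"
  shows "(\<lambda>i. real (bdigit (Suc i) x) / 2 ^ Suc i) sums x"
proof -
  have "(\<lambda>n. \<lfloor>2 ^ n * x\<rfloor> / 2 ^ n) \<longlonglongrightarrow> x"
  proof (rule tendsto_sandwich[where f="\<lambda>n. x - 1 / 2 ^ n" and h="\<lambda>n. x"])
    show "\<forall>\<^sub>F n in sequentially. x - 1 / 2 ^ n \<le> \<lfloor>2 ^ n * x\<rfloor> / 2 ^ n"
    proof (intro always_eventually allI)
      fix n :: nat
      have "2 ^ n * x - 1 \<le> \<lfloor>2 ^ n * x\<rfloor>" by linarith
      then have "(2 ^ n * x - 1) / 2 ^ n \<le> \<lfloor>2 ^ n * x\<rfloor> / 2 ^ n"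
        by (intro divide_right_mono) auto
      then show "x - 1 / 2 ^ n \<le> \<lfloor>2 ^ n * x\<rfloor> / 2 ^ n"
        by (simp add: field_simps)
    qed
    show "\<forall>\<^sub>F n in sequentially. \<lfloor>2 ^ n * x\<rfloor> / 2 ^ n \<le> x"
    proof (intro always_eventually allI)
      fix n :: nat
      have "\<lfloor>2 ^ n * x\<rfloor> \<le> 2 ^ n * x" by linarith
      then show "\<lfloor>2 ^ n * x\<rfloor> / 2 ^ n \<le> x" by (simp add: field_simps)
    qed
    have z: "(\<lambda>n. 1 / (2::real) ^ n) \<longlonglongrightarrow> 0"
      using LIMSEQ_inverse_realpow_zero[of "2::real"] by (simp add: inverse_eq_divide)
    have "(\<lambda>n. x - 1 / 2 ^ n) \<longlonglongrightarrow> x - 0"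
      by (intro tendsto_intros z)
    then show "(\<lambda>n. x - 1 / 2 ^ n) \<longlonglongrightarrow> x" by simp
  qed simp
  then show ?thesis
    unfolding sums_def using partial_digits[OF assms] by simp
qed

lemma geom_half: "(\<Sum>i<m. 1 / (2::real) ^ Suc i) = 1 - 1 / 2 ^ m"
  by (induction m) (auto simp: field_simps)

lemma exists_zero_digit:
  assumes "0 \<le> x" "x < 1"
  shows "\<exists>m. bdigit (Suc m) x = 0"
proof (rule ccontr)
  assume "\<not> ?thesis"
  then have "\<And>i. bdigit (Suc i) x = 1" using bdigit_le1 by (metis le_antisym less_one not_le)
  then have "(\<lambda>i. 1 / (2::real) ^ Suc i) sums x" using digits_sums[OF assms] by simp
  moreover have "(\<lambda>i. 1 / (2::real) ^ Suc i) sums 1"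
    using power_half_series by (simp add: power_one_over)
  ultimately have "x = 1" using sums_unique2 by blast
  then show False using assms by simp
qed

lemma lead_ones_zero:
  assumes "0 \<le> x" "x < 1"
  shows "bdigit (Suc (lead_ones x)) x = 0"
  unfolding lead_ones_def using exists_zero_digit[OF assms] by (rule LeastI_ex)

lemma lead_ones_one:
  assumes "i < lead_ones x"
  shows "bdigit (Suc i) x = 1"
proof -
  have "bdigit (Suc i) x \<noteq> 0" using not_less_Least assms unfolding lead_ones_def by blast
  then show ?thesis using bdigit_le1[of "Suc i" x] by linarith
qed

lemma odometer_formula:
  assumes "0 \<le> x" "x < 1"
  shows "odometer x = x - 1 + 3 / 2 ^ Suc (lead_ones x)"
proof -
  define m where "m = lead_ones x"
  define d where "d i = real (odo_digit x (Suc i)) / 2 ^ Suc i - real (bdigit (Suc i) x) / 2 ^ Suc i" for i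
  have d0: "d i = 0" if "i \<notin> {..<Suc m}" for i
    using that unfolding d_def odo_digit_def m_def by auto
  have "d sums (\<Sum>i\<in>{..<Suc m}. d i)"
    by (rule sums_finite) (use d0 in auto)
  moreover have "(\<Sum>i\<in>{..<Suc m}. d i) = - (\<Sum>i<m. 1 / (2::real) ^ Suc i) + 1 / 2 ^ Suc m"
  proof -
    have "(\<Sum>i\<in>{..<Suc m}. d i) = (\<Sum>i<m. d i) + d m" by simp
    also have "(\<Sum>i<m. d i) = (\<Sum>i<m. - (1 / (2::real) ^ Suc i))"
      by (rule sum.cong) (auto simp: d_def odo_digit_def m_def lead_ones_one)
    also have "d m = 1 / 2 ^ Suc m"
      using lead_ones_zero[OF assms] by (simp add: d_def odo_digit_def m_def)
    finally show ?thesis by (simp add: sum_negf)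
  qed
  moreover have "- (\<Sum>i<m. 1 / (2::real) ^ Suc i) + 1 / 2 ^ Suc m = - 1 + 3 / 2 ^ Suc m"
  proof -
    have "1 / (2::real) ^ m = 2 / 2 ^ Suc m" by simp
    then show ?thesis unfolding geom_half by (simp add: field_simps)
  qed
  ultimately have "d sums (- 1 + 3 / 2 ^ Suc m)"
    by simp
  from sums_add[OF digits_sums[OF assms] this]
  have "(\<lambda>i. real (odo_digit x (Suc i)) / 2 ^ Suc i) sums (x + (- 1 + 3 / 2 ^ Suc m))"
    by (simp add: d_def)
  then show ?thesis unfolding odometer_def m_def by (simp add: sums_iff)
qed

lemma x_interval:
  assumes "0 \<le> x" "x < 1"
  shows "1 - 1 / 2 ^ lead_ones x \<le> x \<and> x < 1 - 1 / 2 ^ Suc (lead_ones x)"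
proof -
  define m where "m = lead_ones x"
  have "(\<Sum>i<Suc m. real (bdigit (Suc i) x) / 2 ^ Suc i) = (\<Sum>i<m. 1 / (2::real) ^ Suc i)"
    using lead_ones_zero[OF assms] lead_ones_one[of _ x] by (simp add: m_def)
  then have e: "\<lfloor>2 ^ Suc m * x\<rfloor> / 2 ^ Suc m = 1 - 1 / (2::real) ^ m"
    using partial_digits[OF assms, of "Suc m"] geom_half by simp
  have "\<lfloor>2 ^ Suc m * x\<rfloor> = (2::real) ^ Suc m - 2"
    using e by (simp add: field_simps)
  moreover have "\<lfloor>2 ^ Suc m * x\<rfloor> \<le> 2 ^ Suc m * x" "2 ^ Suc m * x < \<lfloor>2 ^ Suc m * x\<rfloor> + 1" by linarith+
  ultimately have "2 ^ Suc m - 2 \<le> 2 ^ Suc m * x" "2 ^ Suc m * x < 2 ^ Suc m - 1" by linarith+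
  then have "(2 ^ Suc m - 2) / 2 ^ Suc m \<le> x" "x < (2 ^ Suc m - 1) / 2 ^ Suc m"
    by (simp_all add: field_simps)
  then show ?thesis unfolding m_def[symmetric] by (simp add: field_simps)
qed

lemma odometer_range:
  assumes "0 \<le> x" "x < 1"
  shows "0 \<le> odometer x \<and> odometer x < 1"
proof -
  define m where "m = lead_ones x"
  have i: "1 - 1 / 2 ^ m \<le> x" "x < 1 - 1 / 2 ^ Suc m" using x_interval[OF assms] m_def by auto
  have "odometer x = x - 1 + 3 / 2 ^ Suc m" using odometer_formula[OF assms] m_def by simp
  moreover have "(1::real) / 2 ^ m \<le> 1" "(1::real) / 2 ^ m > 0" by simp_all
  moreover have "3 / (2::real) ^ Suc m = 3 / 2 * (1 / 2 ^ m)" "1 / (2::real) ^ Suc m = 1 / 2 * (1 / 2 ^ m)" by simp_all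
  ultimately show ?thesis using i by linarith
qed

lemma odo_lt_half:
  assumes "0 \<le> x" "x < 1 / 2"
  shows "odometer x = x + 1 / 2"
proof -
  have "\<lfloor>2 * x\<rfloor> = 0" using assms by (simp add: floor_eq_iff)
  then have "bdigit (Suc 0) x = 0" by (simp add: bdigit_def)
  then have "lead_ones x = 0" unfolding lead_ones_def by (simp add: Least_eq_0)
  then show ?thesis using odometer_formula[of x] assms by simp
qed

lemma bdigit_shift:
  assumes "1 / 2 \<le> x" "x < 1"
  shows "bdigit (Suc i) (2 * x - 1) = bdigit (Suc (Suc i)) x"
proof -
  have e: "2 ^ Suc i * (2 * x - 1) = 2 ^ Suc (Suc i) * x - 2 ^ Suc i" by (simp add: algebra_simps)
  have f: "\<lfloor>2 ^ Suc i * (2 * x - 1)\<rfloor> = \<lfloor>2 ^ Suc (Suc i) * x\<rfloor> - 2 ^ Suc i"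
    unfolding e by (metis floor_diff_of_int of_int_numeral of_int_power)
  have p: "0 \<le> \<lfloor>2 ^ Suc i * (2 * x - 1)\<rfloor>" using assms by simp
  have "\<lfloor>2 ^ Suc i * (2 * x - 1)\<rfloor> mod 2 = \<lfloor>2 ^ Suc (Suc i) * x\<rfloor> mod 2"
    unfolding f by (simp add: mod_diff_eq[symmetric])
  then show ?thesis
  proof -
    have q: "0 \<le> \<lfloor>2 ^ Suc (Suc i) * x\<rfloor>" using assms by simp
    have "nat \<lfloor>2 ^ Suc i * (2 * x - 1)\<rfloor> mod 2 = nat (\<lfloor>2 ^ Suc i * (2 * x - 1)\<rfloor> mod 2)"
      using p by (simp add: nat_mod_distrib)
    also have "\<dots> = nat (\<lfloor>2 ^ Suc (Suc i) * x\<rfloor> mod 2)" using \<open>_ mod 2 = _ mod 2\<close> by simp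
    also have "\<dots> = nat \<lfloor>2 ^ Suc (Suc i) * x\<rfloor> mod 2" using q by (simp add: nat_mod_distrib)
    finally show ?thesis by (simp add: bdigit_def)
  qed
qed

lemma lead_ones_shift:
  assumes "1 / 2 \<le> x" "x < 1"
  shows "lead_ones x = Suc (lead_ones (2 * x - 1))"
proof -
  have "\<lfloor>2 * x\<rfloor> = 1" using assms by (simp add: floor_eq_iff)
  then have b1: "bdigit (Suc 0) x \<noteq> 0" by (simp add: bdigit_def)
  have "lead_ones x = (LEAST m. bdigit (Suc m) x = 0)" by (simp add: lead_ones_def)
  also have "\<dots> = Suc (LEAST m. bdigit (Suc (Suc m)) x = 0)"
    by (rule Least_Suc2[where n="Suc (lead_ones (2 * x - 1))"]) (use b1 lead_ones_zero[of "2*x-1"] bdigit_shift[OF assms] assms in auto)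
  also have "(LEAST m. bdigit (Suc (Suc m)) x = 0) = lead_ones (2 * x - 1)"
    unfolding lead_ones_def using bdigit_shift[OF assms] by simp
  finally show ?thesis .
qed

lemma odo_ge_half:
  assumes "1 / 2 \<le> x" "x < 1"
  shows "odometer x = odometer (2 * x - 1) / 2"
proof -
  have "3 / (2::real) ^ Suc (Suc (lead_ones (2 * x - 1))) = (3 / 2 ^ Suc (lead_ones (2 * x - 1))) / 2"
    by simp
  then show ?thesis
    using odometer_formula[of x] odometer_formula[of "2 * x - 1"] lead_ones_shift[OF assms] assms
    by simp
qed

lemma S_pow_range:
  assumes "0 \<le> x" "x < 1"
  shows "0 \<le> (odometer ^^ k) x \<and> (odometer ^^ k) x < 1"
  by (induction k) (use assms odometer_range in auto)

lemma S2_half: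
  assumes "0 \<le> w" "w < 1"
  shows "(odometer ^^ 2) (w / 2) = odometer w / 2"
    and "(odometer ^^ 2) ((w + 1) / 2) = (odometer w + 1) / 2"
proof -
  have h1: "odometer (w / 2) = (w + 1) / 2" using odo_lt_half[of "w/2"] assms by simp
  have e: "2 * ((w + 1) / 2) - 1 = w" by (simp add: field_simps)
  have o2: "odometer ((w + 1) / 2) = odometer w / 2"
    using odo_ge_half[of "(w+1)/2"] assms unfolding e by simp
  have "(odometer ^^ 2) (w / 2) = odometer (odometer (w / 2))" by (simp add: numeral_2_eq_2)
  also have "\<dots> = odometer w / 2" unfolding h1 o2 ..
  finally show "(odometer ^^ 2) (w / 2) = odometer w / 2" .
  have "odometer (odometer w / 2) = odometer w / 2 + 1 / 2"
    using odo_lt_half[of "odometer w / 2"] odometer_range[OF assms] by simp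
  note h3 = this
  have "(odometer ^^ 2) ((w + 1) / 2) = odometer (odometer ((w + 1) / 2))" by (simp add: numeral_2_eq_2)
  also have "\<dots> = odometer w / 2 + 1 / 2" unfolding o2 h3 ..
  also have "\<dots> = (odometer w + 1) / 2" by (simp add: field_simps)
  finally show "(odometer ^^ 2) ((w + 1) / 2) = (odometer w + 1) / 2" .
qed

lemma S2_pow_half1:
  assumes "0 \<le> w" "w < 1"
  shows "((odometer ^^ 2) ^^ k) (w / 2) = (odometer ^^ k) w / 2"
proof (induction k)
  case (Suc k)
  have "((odometer ^^ 2) ^^ Suc k) (w / 2) = (odometer ^^ 2) (((odometer ^^ 2) ^^ k) (w / 2))" by simp
  also have "\<dots> = (odometer ^^ 2) ((odometer ^^ k) w / 2)" unfolding Suc.IH ..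
  also have "\<dots> = odometer ((odometer ^^ k) w) / 2"
    by (rule S2_half(1)) (use S_pow_range[OF assms, of k] in auto)
  also have "\<dots> = (odometer ^^ Suc k) w / 2" by simp
  finally show ?case .
qed simp

lemma S2_pow_half2:
  assumes "0 \<le> w" "w < 1"
  shows "((odometer ^^ 2) ^^ k) ((w + 1) / 2) = ((odometer ^^ k) w + 1) / 2"
proof (induction k)
  case (Suc k)
  have "((odometer ^^ 2) ^^ Suc k) ((w + 1) / 2) = (odometer ^^ 2) (((odometer ^^ 2) ^^ k) ((w + 1) / 2))" by simp
  also have "\<dots> = (odometer ^^ 2) (((odometer ^^ k) w + 1) / 2)" unfolding Suc.IH ..
  also have "\<dots> = (odometer ((odometer ^^ k) w) + 1) / 2"
    by (rule S2_half(2)) (use S_pow_range[OF assms, of k] in auto)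
  also have "\<dots> = ((odometer ^^ Suc k) w + 1) / 2" by simp
  finally show ?case .
qed simp

lemma S_tower:
  assumes "0 \<le> y" "y < 1"
  shows "(odometer ^^ (2 ^ n)) (y / 2 ^ n) = odometer y / 2 ^ n"
proof (induction n)
  case 0
  then show ?case by simp
next
  case (Suc n)
  have "(odometer ^^ (2 ^ Suc n)) (y / 2 ^ Suc n) = ((odometer ^^ 2) ^^ (2 ^ n)) ((y / 2 ^ n) / 2)"
    by (simp add: funpow_mult mult.commute)
  also have "\<dots> = (odometer ^^ (2 ^ n)) (y / 2 ^ n) / 2"
  proof (rule S2_pow_half1)
    show "0 \<le> y / 2 ^ n" using assms by simp
    have "1 \<le> (2::real) ^ n" by simp
    then have "y * 1 \<le> y * 2 ^ n" using assms by (intro mult_left_mono) auto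
    then have "y / 2 ^ n \<le> y" using assms by (simp add: divide_le_eq)
    then show "y / 2 ^ n < 1" using assms by linarith
  qed
  also have "\<dots> = odometer y / 2 ^ Suc n" using Suc by simp
  finally show ?case .
qed

lemma S_tower_range:
  assumes "0 \<le> u" "u < 1 / 2 ^ n"
  shows "0 \<le> (odometer ^^ (q * 2 ^ n)) u \<and> (odometer ^^ (q * 2 ^ n)) u < 1 / 2 ^ n"
proof (induction q)
  case 0
  then show ?case using assms by simp
next
  case (Suc q)
  define y where "y = 2 ^ n * (odometer ^^ (q * 2 ^ n)) u"
  have y: "0 \<le> y" "y < 1" using Suc by (auto simp: y_def field_simps)
  have "(odometer ^^ (Suc q * 2 ^ n)) u = (odometer ^^ (2 ^ n)) ((odometer ^^ (q * 2 ^ n)) u)"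
    by (simp add: funpow_add)
  also have "(odometer ^^ (q * 2 ^ n)) u = y / 2 ^ n" by (simp add: y_def)
  also have "(odometer ^^ (2 ^ n)) (y / 2 ^ n) = odometer y / 2 ^ n" using S_tower y by simp
  finally have e: "(odometer ^^ (Suc q * 2 ^ n)) u = odometer y / 2 ^ n" .
  have "odometer y / 2 ^ n < 1 / 2 ^ n"
    using odometer_range[OF y] by (intro divide_strict_right_mono) auto
  then show ?case unfolding e using odometer_range[OF y] by simp
qed

fun rv :: "nat \<Rightarrow> nat \<Rightarrow> nat" where
  "rv 0 k = 0"
| "rv (Suc n) k = rv n (k div 2) + (k mod 2) * 2 ^ n"

lemma rv_lt: "rv n k < 2 ^ n"
proof (induction n arbitrary: k)
  case (Suc n)
  have h: "(k mod 2) * 2 ^ n \<le> 1 * (2::nat) ^ n" by (intro mult_right_mono) auto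
  have ih: "rv n (k div 2) < 2 ^ n" by (rule Suc)
  have s: "rv (Suc n) k = rv n (k div 2) + k mod 2 * 2 ^ n" by simp
  have t: "(2::nat) ^ Suc n = 2 ^ n + 2 ^ n" by simp
  show ?case unfolding s t using h ih by linarith
qed simp

lemma rv_inj: "inj_on (rv n) {..<2 ^ n}"
proof (induction n)
  case 0
  then show ?case by (auto simp: inj_on_def)
next
  case (Suc n)
  show ?case
  proof (rule inj_onI)
    fix k k' assume k: "k \<in> {..<2 ^ Suc n}" "k' \<in> {..<2 ^ Suc n}" and e: "rv (Suc n) k = rv (Suc n) k'"
    have m: "k mod 2 = k' mod 2"
    proof (rule ccontr)
      assume "k mod 2 \<noteq> k' mod 2"
      then have "k mod 2 = 0 \<and> k' mod 2 = 1 \<or> k mod 2 = 1 \<and> k' mod 2 = 0" by auto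
      then show False using e rv_lt[of n "k div 2"] rv_lt[of n "k' div 2"] by auto
    qed
    then have "rv n (k div 2) = rv n (k' div 2)" using e by simp
    moreover have "k div 2 \<in> {..<2 ^ n}" "k' div 2 \<in> {..<2 ^ n}" using k by auto
    ultimately have "k div 2 = k' div 2" using Suc inj_onD by metis
    with m show "k = k'" by (metis div_mult_mod_eq)
  qed
qed

lemma rv_bij: "bij_betw (rv n) {..<2 ^ n} {..<2 ^ n}"
proof -
  have "rv n ` {..<2 ^ n} \<subseteq> {..<2 ^ n}" using rv_lt by auto
  moreover have "card (rv n ` {..<2 ^ n}) = card {..<(2::nat) ^ n}"
    using card_image[OF rv_inj] by simp
  ultimately have "rv n ` {..<2 ^ n} = {..<2 ^ n}"
    by (simp add: card_subset_eq)
  then show ?thesis using rv_inj by (simp add: bij_betw_def)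
qed

lemma S_pow_small:
  assumes "0 \<le> u" "u < 1 / 2 ^ n" "k < 2 ^ n"
  shows "(odometer ^^ k) u = u + rv n k / 2 ^ n"
  using assms
proof (induction n arbitrary: u k)
  case 0
  then show ?case by simp
next
  case (Suc n)
  define w where "w = 2 * u"
  define a where "a = k div 2"
  have w: "0 \<le> w" "w < 1 / 2 ^ n" using Suc.prems by (auto simp: w_def field_simps)
  have w1: "w < 1"
  proof -
    have "1 / (2::real) ^ n \<le> 1" by simp
    then show ?thesis using w(2) by linarith
  qed
  have a: "a < 2 ^ n" using Suc.prems by (auto simp: a_def)
  have ih: "(odometer ^^ a) w = w + rv n a / 2 ^ n" using Suc.IH w a by simp
  have uw: "u = w / 2" by (simp add: w_def)
  have even0: "(odometer ^^ (2 * a)) u = (odometer ^^ a) w / 2"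
  proof -
    have "(odometer ^^ (2 * a)) u = ((odometer ^^ 2) ^^ a) (w / 2)"
      by (simp add: funpow_mult uw)
    also have "\<dots> = (odometer ^^ a) w / 2" using S2_pow_half1 w w1 by simp
    finally show ?thesis .
  qed
  have aw: "(odometer ^^ a) w / 2 = u + rv n a / 2 ^ Suc n"
  proof -
    have "(odometer ^^ a) w / 2 = (w + rv n a / 2 ^ n) / 2" by (simp only: ih)
    also have "\<dots> = w / 2 + rv n a / 2 ^ Suc n" by (simp add: field_simps)
    also have "w / 2 = u" using uw by simp
    finally show ?thesis .
  qed
  have even: "(odometer ^^ (2 * a)) u = u + rv n a / 2 ^ Suc n" using even0 aw by simp
  show ?case
  proof (cases "k mod 2 = 0")
    case True
    then have "k = 2 * a" using True by (simp add: a_def) presburger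
    then show ?thesis using even True by (simp add: a_def)
  next
    case False
    then have k: "k = Suc (2 * a)" by (simp add: a_def) presburger
    have r: "0 \<le> (odometer ^^ a) w \<and> (odometer ^^ a) w < 1" using S_pow_range w w1 by simp
    have "(odometer ^^ k) u = odometer ((odometer ^^ (2 * a)) u)" by (simp add: k)
    also note even0
    also have "odometer ((odometer ^^ a) w / 2) = (odometer ^^ a) w / 2 + 1 / 2"
      using odo_lt_half r by simp
    finally have e: "(odometer ^^ k) u = (odometer ^^ a) w / 2 + 1 / 2" .
    have "k mod 2 = 1" using False by simp
    then have "rv (Suc n) k = rv n a + 2 ^ n" by (simp add: a_def)
    then have "real (rv (Suc n) k) / 2 ^ Suc n = rv n a / 2 ^ Suc n + 1 / 2"
      by (simp add: add_divide_distrib)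
    moreover note aw
    ultimately show ?thesis using e by linarith
  qed
qed

lemma nat_floor_lt: "0 \<le> v \<Longrightarrow> v < 2 ^ n \<Longrightarrow> nat \<lfloor>v\<rfloor> < (2::nat) ^ n"
proof -
  assume "0 \<le> v" "v < 2 ^ n"
  then have "\<lfloor>v\<rfloor> < 2 ^ n" by (metis floor_less_iff of_int_numeral of_int_power)
  then show ?thesis using \<open>0 \<le> v\<close> by (simp add: nat_less_iff)
qed

lemma Phi_Rect:
  fixes u v :: real
  assumes "(u, v) \<in> Rect n"
  shows "Phi n (u, v) = (u + rv n (nat \<lfloor>v\<rfloor>) / 2 ^ n, v - \<lfloor>v\<rfloor>)"
proof -
  have "0 \<le> u" "u < 1 / 2 ^ n" "0 \<le> v" "v < 2 ^ n" using assms by (auto simp: Rect_def)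
  then show ?thesis using S_pow_small[of u n "nat \<lfloor>v\<rfloor>"] nat_floor_lt[of v n]
    by (simp add: Phi_def)
qed

lemma floor_small_plus:
  assumes "0 \<le> a" "a < 1"
  shows "\<lfloor>a + real j\<rfloor> = int j"
  using assms by (simp add: floor_eq_iff)

lemma Phi_inj: "inj_on (Phi n) (Rect n)"
proof (rule inj_onI)
  fix p p' assume p: "p \<in> Rect n" and p': "p' \<in> Rect n" and e: "Phi n p = Phi n p'"
  obtain u v where uv: "p = (u, v)" by (cases p)
  obtain u' v' where uv': "p' = (u', v')" by (cases p')
  have b: "0 \<le> u" "u < 1 / 2 ^ n" "0 \<le> v" "v < 2 ^ n" using p uv by (auto simp: Rect_def)
  have b': "0 \<le> u'" "u' < 1 / 2 ^ n" "0 \<le> v'" "v' < 2 ^ n" using p' uv' by (auto simp: Rect_def)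
  define k where "k = nat \<lfloor>v\<rfloor>"
  define k' where "k' = nat \<lfloor>v'\<rfloor>"
  have e1: "u + rv n k / 2 ^ n = u' + rv n k' / 2 ^ n"
    and e2: "v - \<lfloor>v\<rfloor> = v' - \<lfloor>v'\<rfloor>"
    using e Phi_Rect[OF p[unfolded uv]] Phi_Rect[OF p'[unfolded uv']] uv uv' k_def k'_def by auto
  have "2 ^ n * u + rv n k = 2 ^ n * u' + rv n k'"
    using e1 by (simp add: field_simps)
  moreover have "0 \<le> 2 ^ n * u" "2 ^ n * u < 1" "0 \<le> 2 ^ n * u'" "2 ^ n * u' < 1"
    using b b' by (auto simp: field_simps)
  ultimately have "int (rv n k) = int (rv n k')"
    using floor_small_plus[of "2 ^ n * u" "rv n k"] floor_small_plus[of "2 ^ n * u'" "rv n k'"]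
    by metis
  then have "rv n k = rv n k'" by simp
  moreover have "k \<in> {..<2 ^ n}" "k' \<in> {..<2 ^ n}"
    using nat_floor_lt b b' k_def k'_def by auto
  ultimately have kk: "k = k'" using rv_inj inj_onD by metis
  then have "u = u'" using e1 by simp
  moreover have "\<lfloor>v\<rfloor> = \<lfloor>v'\<rfloor>"
  proof -
    have "0 \<le> \<lfloor>v\<rfloor>" "0 \<le> \<lfloor>v'\<rfloor>" using b b' by simp_all
    then show ?thesis using kk eq_nat_nat_iff unfolding k_def k'_def by metis
  qed
  then have "v = v'" using e2 by simp
  ultimately show "p = p'" using uv uv' by simp
qed

lemma Phi_surj: "Phi n ` Rect n = Msp"
proof
  show "Phi n ` Rect n \<subseteq> Msp"
  proof
    fix z assume "z \<in> Phi n ` Rect n"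
    then obtain u v where p: "(u, v) \<in> Rect n" and z: "z = Phi n (u, v)" by auto
    have b: "0 \<le> u" "u < 1 / 2 ^ n" "0 \<le> v" "v < 2 ^ n" using p by (auto simp: Rect_def)
    have "rv n (nat \<lfloor>v\<rfloor>) + 1 \<le> (2::nat) ^ n" using rv_lt[of n "nat \<lfloor>v\<rfloor>"] by linarith
    then have r: "real (rv n (nat \<lfloor>v\<rfloor>)) + 1 \<le> 2 ^ n"
      by (metis of_nat_1 of_nat_add of_nat_le_iff of_nat_numeral of_nat_power)
    have "u + rv n (nat \<lfloor>v\<rfloor>) / 2 ^ n < 1 / 2 ^ n + rv n (nat \<lfloor>v\<rfloor>) / 2 ^ n" using b by simp
    also have "\<dots> = (real (rv n (nat \<lfloor>v\<rfloor>)) + 1) / 2 ^ n" by (simp add: field_simps)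
    also have "\<dots> \<le> 1" using r by simp
    finally have lt1: "u + rv n (nat \<lfloor>v\<rfloor>) / 2 ^ n < 1" .
    have "v - of_int \<lfloor>v\<rfloor> < 1" "0 \<le> v - of_int \<lfloor>v\<rfloor>" by linarith+
    then show "z \<in> Msp" using z Phi_Rect[OF p] b lt1 by (simp add: Msp_def)
  qed
  show "Msp \<subseteq> Phi n ` Rect n"
  proof
    fix z assume z: "z \<in> Msp"
    obtain x y where xy: "z = (x, y)" by (cases z)
    have b: "0 \<le> x" "x < 1" "0 \<le> y" "y < 1" using z xy by (auto simp: Msp_def)
    define j where "j = nat \<lfloor>2 ^ n * x\<rfloor>"
    have "0 \<le> \<lfloor>2 ^ n * x\<rfloor>" using b by simp
    then have rj: "real j = of_int \<lfloor>2 ^ n * x\<rfloor>" unfolding j_def by simp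
    have j0: "real j \<le> 2 ^ n * x" "2 ^ n * x < real j + 1"
      unfolding rj by linarith+
    have "j < 2 ^ n" unfolding j_def using b by (intro nat_floor_lt) (auto simp: field_simps)
    then obtain k where k: "k < 2 ^ n" "rv n k = j"
      using rv_bij[of n] by (metis bij_betw_iff_bijections lessThan_iff)
    define u where "u = x - j / 2 ^ n"
    define v where "v = real k + y"
    have fv: "\<lfloor>v\<rfloor> = int k" unfolding v_def using b by (simp add: floor_eq_iff)
    have ue: "u = (2 ^ n * x - j) / 2 ^ n" by (simp add: u_def field_simps)
    have u: "0 \<le> u" "u < 1 / 2 ^ n" unfolding ue using j0
      by (auto intro!: divide_strict_right_mono divide_nonneg_pos)
    have "real k + 1 \<le> 2 ^ n" using k(1)
      by (metis Suc_leI of_nat_Suc of_nat_le_iff of_nat_numeral of_nat_power add.commute)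
    then have v: "0 \<le> v" "v < 2 ^ n" unfolding v_def using b by auto
    have p: "(u, v) \<in> Rect n" using u v by (simp add: Rect_def)
    have "Phi n (u, v) = z" using Phi_Rect[OF p] fv k xy unfolding u_def v_def by simp
    then show "z \<in> Phi n ` Rect n" using p by force
  qed
qed

lemma Phi_inv_in: "z \<in> Msp \<Longrightarrow> Phi_inv n z \<in> Rect n"
  unfolding Phi_inv_def using Phi_surj by (metis inv_into_into)

lemma Phi_Phi_inv: "z \<in> Msp \<Longrightarrow> Phi n (Phi_inv n z) = z"
  unfolding Phi_inv_def using Phi_surj by (metis f_inv_into_f)

lemma Phi_inv_Phi: "p \<in> Rect n \<Longrightarrow> Phi_inv n (Phi n p) = p"
  unfolding Phi_inv_def using Phi_inj by (metis inv_into_f_f)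

lemma flow_Phi:
  fixes u v s :: real
  assumes z: "z \<in> Msp" and s: "0 \<le> s" and uv: "Phi_inv n z = (u, v)"
  defines "q \<equiv> nat \<lfloor>(v + s) / 2 ^ n\<rfloor>"
  shows "Phi_inv n (flow s z) = ((odometer ^^ (q * 2 ^ n)) u, v + s - real q * 2 ^ n)"
proof -
  have p: "(u, v) \<in> Rect n" using Phi_inv_in[OF z, of n] unfolding uv .
  have b: "0 \<le> u" "u < 1 / 2 ^ n" "0 \<le> v" "v < 2 ^ n" using p by (auto simp: Rect_def)
  have zz: "z = ((odometer ^^ nat \<lfloor>v\<rfloor>) u, v - \<lfloor>v\<rfloor>)"
    using uv Phi_Phi_inv[OF z, of n] by (simp add: Phi_def)
  have f1: "\<lfloor>v - \<lfloor>v\<rfloor> + s\<rfloor> = \<lfloor>v + s\<rfloor> - \<lfloor>v\<rfloor>"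
    by (metis add.commute add_diff_eq floor_diff_of_int)
  have fv: "0 \<le> \<lfloor>v\<rfloor>" "\<lfloor>v\<rfloor> \<le> \<lfloor>v + s\<rfloor>" using b s by (auto intro: floor_mono)
  have n1: "nat (\<lfloor>v + s\<rfloor> - \<lfloor>v\<rfloor>) + nat \<lfloor>v\<rfloor> = nat \<lfloor>v + s\<rfloor>"
    using fv by (subst nat_add_distrib[symmetric]) auto
  have fp: "(odometer ^^ nat (\<lfloor>v + s\<rfloor> - \<lfloor>v\<rfloor>)) ((odometer ^^ nat \<lfloor>v\<rfloor>) u) = (odometer ^^ nat \<lfloor>v + s\<rfloor>) u"
  proof -
    have "(odometer ^^ nat (\<lfloor>v + s\<rfloor> - \<lfloor>v\<rfloor>)) ((odometer ^^ nat \<lfloor>v\<rfloor>) u)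
        = (odometer ^^ (nat (\<lfloor>v + s\<rfloor> - \<lfloor>v\<rfloor>) + nat \<lfloor>v\<rfloor>)) u" by (simp add: funpow_add)
    then show ?thesis unfolding n1 .
  qed
  have fl: "flow s z = ((odometer ^^ nat \<lfloor>v + s\<rfloor>) u, v + s - \<lfloor>v + s\<rfloor>)"
    unfolding zz flow_def using f1 fp by simp
  define N :: real where "N = 2 ^ n"
  have N: "N > 0" by (simp add: N_def)
  define r where "r = v + s - real q * N"
  have qd: "real q * N \<le> v + s" "v + s < (real q + 1) * N"
  proof -
    have ge: "0 \<le> (v + s) / N" using b s N by simp
    have "real q = \<lfloor>(v + s) / N\<rfloor>" unfolding q_def N_def using ge N_def by simp
    then have "real q \<le> (v + s) / N" "(v + s) / N < real q + 1" by linarith+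
    then show "real q * N \<le> v + s" "v + s < (real q + 1) * N" using N by (simp_all add: field_simps)
  qed
  have r: "0 \<le> r" "r < N" using qd unfolding r_def by (auto simp: algebra_simps)
  have qN: "real (q * 2 ^ n) = real q * N" by (simp add: N_def)
  have fr: "\<lfloor>r\<rfloor> = \<lfloor>v + s\<rfloor> - int (q * 2 ^ n)"
  proof -
    have "v + s = r + real (q * 2 ^ n)" unfolding r_def qN by simp
    then have "\<lfloor>v + s\<rfloor> = \<lfloor>r\<rfloor> + int (q * 2 ^ n)" by (metis floor_add_int of_int_of_nat_eq)
    then show ?thesis by simp
  qed
  have n2: "nat \<lfloor>r\<rfloor> + q * 2 ^ n = nat \<lfloor>v + s\<rfloor>"
  proof -
    have "0 \<le> \<lfloor>r\<rfloor>" using r by simp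
    then have "nat (\<lfloor>r\<rfloor> + int (q * 2 ^ n)) = nat \<lfloor>r\<rfloor> + nat (int (q * 2 ^ n))"
      by (intro nat_add_distrib) auto
    then have "nat \<lfloor>r\<rfloor> + q * 2 ^ n = nat (\<lfloor>r\<rfloor> + int (q * 2 ^ n))" unfolding nat_int by (rule sym)
    then show ?thesis using fr by simp
  qed
  have rr: "r - \<lfloor>r\<rfloor> = v + s - \<lfloor>v + s\<rfloor>" using fr unfolding r_def N_def by simp
  define u' where "u' = (odometer ^^ (q * 2 ^ n)) u"
  have p': "(u', r) \<in> Rect n"
    using S_tower_range[OF b(1,2), of q] r unfolding u'_def N_def by (simp add: Rect_def)
  have fp2: "(odometer ^^ nat \<lfloor>r\<rfloor>) ((odometer ^^ (q * 2 ^ n)) u) = (odometer ^^ nat \<lfloor>v + s\<rfloor>) u"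
  proof -
    have "(odometer ^^ nat \<lfloor>r\<rfloor>) ((odometer ^^ (q * 2 ^ n)) u) = (odometer ^^ (nat \<lfloor>r\<rfloor> + q * 2 ^ n)) u"
      by (simp add: funpow_add)
    then show ?thesis unfolding n2 .
  qed
  have "Phi n (u', r) = flow s z"
    unfolding fl Phi_def u'_def using fp2 rr by simp
  then have "Phi_inv n (flow s z) = (u', r)" using Phi_inv_Phi[OF p'] by simp
  then show ?thesis unfolding u'_def r_def N_def .
qed

lemma lebesgue_transl:
  fixes t :: "'a::euclidean_space"
  shows "distr lebesgue lebesgue (\<lambda>x. t + x) = lebesgue"
    and "(\<lambda>x. t + x) \<in> lebesgue \<rightarrow>\<^sub>M lebesgue"
proof -
  have T: "(\<lambda>x. t + (\<Sum>j\<in>Basis. (1 * (x \<bullet> j)) *\<^sub>R j)) = (\<lambda>x::'a. t + x)"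
    by (simp add: euclidean_representation)
  show "(\<lambda>x. t + x) \<in> lebesgue \<rightarrow>\<^sub>M lebesgue"
    using lebesgue_affine_measurable[where c="\<lambda>_. 1" and t=t] unfolding T by simp
  have "lebesgue = density (distr lebesgue lebesgue (\<lambda>x::'a. t + x)) (\<lambda>_. 1)"
    using lebesgue_affine_euclidean[where c="\<lambda>_. 1" and t=t] unfolding T by simp
  then show "distr lebesgue lebesgue (\<lambda>x. t + x) = lebesgue"
    by (simp add: density_1)
qed

lemma integrable_transl:
  fixes g :: "'a::euclidean_space \<Rightarrow> real"
  assumes "integrable lebesgue g"
  shows "integrable lebesgue (\<lambda>x. g (t + x))"
    and "integral\<^sup>L lebesgue (\<lambda>x. g (t + x)) = integral\<^sup>L lebesgue g"
proof -
  have m: "g \<in> borel_measurable lebesgue" using assms by simp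
  have "integrable (distr lebesgue lebesgue (\<lambda>x. t + x)) g" unfolding lebesgue_transl(1)[of t] using assms .
  then show "integrable lebesgue (\<lambda>x. g (t + x))"
    using integrable_distr_eq[OF lebesgue_transl(2) m] by simp
  have "integral\<^sup>L (distr lebesgue lebesgue (\<lambda>x. t + x)) g = integral\<^sup>L lebesgue (\<lambda>x. g (t + x))"
    by (rule integral_distr[OF lebesgue_transl(2) m])
  then show "integral\<^sup>L lebesgue (\<lambda>x. g (t + x)) = integral\<^sup>L lebesgue g"
    unfolding lebesgue_transl(1)[of t] by simp
qed

lemma box_lebesgue:
  fixes A B :: "real set"
  assumes "A \<in> sets borel" "B \<in> sets borel"
  shows "A \<times> B \<in> sets lebesgue"
proof -
  have "A \<times> B \<in> sets (lborel \<Otimes>\<^sub>M (lborel :: real measure))" using assms by auto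
  then have "A \<times> B \<in> sets (lborel :: (real \<times> real) measure)" unfolding lborel_prod .
  then show ?thesis by simp
qed

lemma null_Times_UNIV:
  assumes "B \<in> null_sets (lborel :: real measure)"
  shows "B \<times> (UNIV :: real set) \<in> null_sets (lborel :: (real \<times> real) measure)"
proof -
  have "B \<times> UNIV \<in> sets (lborel \<Otimes>\<^sub>M (lborel :: real measure))"
    using assms by auto
  moreover have "emeasure (lborel \<Otimes>\<^sub>M lborel) (B \<times> (UNIV :: real set)) = 0"
    using assms by (subst lborel.emeasure_pair_measure_Times) auto
  ultimately show ?thesis unfolding lborel_prod by (simp add: null_sets_def)
qed

definition Dk :: "nat \<Rightarrow> nat \<Rightarrow> (real \<times> real) set" where
  "Dk n k = {rv n k / 2 ^ n ..< rv n k / 2 ^ n + 1 / 2 ^ n} \<times> {0..<1}"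
definition Ek :: "nat \<Rightarrow> nat \<Rightarrow> (real \<times> real) set" where
  "Ek n k = {0..<1 / 2 ^ n} \<times> {real k..<real k + 1}"
definition ak :: "nat \<Rightarrow> nat \<Rightarrow> real \<times> real" where
  "ak n k = (rv n k / 2 ^ n, - real k)"

lemma real_lt_pow:
  assumes "k < (2::nat) ^ n"
  shows "real k + 1 \<le> 2 ^ n"
proof -
  have "k + 1 \<le> (2::nat) ^ n" using assms by simp
  then have "real (k + 1) \<le> real ((2::nat) ^ n)" by (simp only: of_nat_le_iff)
  then show ?thesis by simp
qed

lemma Ek_char:
  assumes "k < 2 ^ n"
  shows "p \<in> Ek n k \<longleftrightarrow> p \<in> Rect n \<and> nat \<lfloor>snd p\<rfloor> = k"
proof -
  obtain u v where p: "p = (u, v)" by (cases p)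
  have kN: "real k + 1 \<le> 2 ^ n" using real_lt_pow[OF assms] .
  show ?thesis
  proof
    assume "p \<in> Ek n k"
    then have "0 \<le> u" "u < 1 / 2 ^ n" "real k \<le> v" "v < real k + 1" by (auto simp: Ek_def p)
    moreover have "\<lfloor>v\<rfloor> = int k" using calculation by (simp add: floor_eq_iff)
    ultimately show "p \<in> Rect n \<and> nat \<lfloor>snd p\<rfloor> = k" using kN by (auto simp: Rect_def p)
  next
    assume a: "p \<in> Rect n \<and> nat \<lfloor>snd p\<rfloor> = k"
    then have "0 \<le> u" "u < 1 / 2 ^ n" "0 \<le> v" "nat \<lfloor>v\<rfloor> = k" by (auto simp: Rect_def p)
    moreover have "\<lfloor>v\<rfloor> = int k"
    proof -
      have "0 \<le> \<lfloor>v\<rfloor>" using \<open>0 \<le> v\<close> by simp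
      then have "\<lfloor>v\<rfloor> = int (nat \<lfloor>v\<rfloor>)" by simp
      then show ?thesis using \<open>nat \<lfloor>v\<rfloor> = k\<close> by simp
    qed
    moreover have "real k \<le> v" "v < real k + 1" using calculation(5) by linarith+
    ultimately show "p \<in> Ek n k" by (simp add: Ek_def p)
  qed
qed

lemma Dk_char:
  assumes "k < 2 ^ n"
  shows "z \<in> Dk n k \<longleftrightarrow> z \<in> Msp \<and> rv n k = nat \<lfloor>2 ^ n * fst z\<rfloor>"
proof -
  obtain x y where z: "z = (x, y)" by (cases z)
  have r: "real (rv n k) + 1 \<le> 2 ^ n" using real_lt_pow[OF rv_lt[of n k]] .
  have "x \<in> {rv n k / 2 ^ n ..< rv n k / 2 ^ n + 1 / 2 ^ n} \<longleftrightarrow> real (rv n k) \<le> 2 ^ n * x \<and> 2 ^ n * x < real (rv n k) + 1"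
    by (auto simp: field_simps)
  also have "\<dots> \<longleftrightarrow> \<lfloor>2 ^ n * x\<rfloor> = int (rv n k)" by (simp add: floor_eq_iff)
  finally have e: "x \<in> {rv n k / 2 ^ n ..< rv n k / 2 ^ n + 1 / 2 ^ n} \<longleftrightarrow> \<lfloor>2 ^ n * x\<rfloor> = int (rv n k)" .
  show ?thesis
  proof
    assume "z \<in> Dk n k"
    then have a: "\<lfloor>2 ^ n * x\<rfloor> = int (rv n k)" "0 \<le> y" "y < 1"
      "rv n k / 2 ^ n \<le> x" "x < rv n k / 2 ^ n + 1 / 2 ^ n"
      using e by (auto simp: Dk_def z)
    have "x < (real (rv n k) + 1) / 2 ^ n" using a(5) by (simp add: add_divide_distrib)
    also have "\<dots> \<le> 1" using r by simp
    finally have "x < 1" .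
    moreover have "0 \<le> real (rv n k) / 2 ^ n" by simp
    then have "0 \<le> x" using a(4) by linarith
    ultimately show "z \<in> Msp \<and> rv n k = nat \<lfloor>2 ^ n * fst z\<rfloor>" using a by (simp add: Msp_def z)
  next
    assume a: "z \<in> Msp \<and> rv n k = nat \<lfloor>2 ^ n * fst z\<rfloor>"
    then have "0 \<le> x" "0 \<le> y" "y < 1" "rv n k = nat \<lfloor>2 ^ n * x\<rfloor>" by (auto simp: Msp_def z)
    moreover have "0 \<le> \<lfloor>2 ^ n * x\<rfloor>" using calculation by simp
    ultimately have "\<lfloor>2 ^ n * x\<rfloor> = int (rv n k)" "0 \<le> y" "y < 1" by simp_all
    then show "z \<in> Dk n k" using e by (simp add: Dk_def z)
  qed
qed

lemma Ek_shift: "ak n k + p \<in> Dk n k \<longleftrightarrow> p \<in> Ek n k"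
  by (cases p) (auto simp: ak_def Dk_def Ek_def)

lemma Phi_Ek:
  assumes "k < 2 ^ n" "p \<in> Ek n k"
  shows "Phi n p = ak n k + p"
proof -
  obtain u v where p: "p = (u, v)" by (cases p)
  have c: "p \<in> Rect n" "nat \<lfloor>v\<rfloor> = k" using Ek_char[OF assms(1)] assms(2) p by auto
  have "0 \<le> v" using c p by (auto simp: Rect_def)
  then have "\<lfloor>v\<rfloor> = int k" using c by linarith
  then show ?thesis using Phi_Rect[of u v n] c p by (simp add: ak_def)
qed

lemma sum_ind_E: "(\<Sum>k<2 ^ n. indicator (Ek n k) p) = (indicator (Rect n) p :: real)"
proof (cases "p \<in> Rect n")
  case True
  obtain u v where p: "p = (u, v)" by (cases p)
  have "nat \<lfloor>v\<rfloor> < 2 ^ n" using True p by (intro nat_floor_lt) (auto simp: Rect_def)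
  then have "(\<Sum>k<2 ^ n. indicator (Ek n k) p) = (\<Sum>k<2 ^ n. if k = nat \<lfloor>v\<rfloor> then 1 else (0::real))"
    using Ek_char True p by (intro sum.cong) (auto simp: indicator_def)
  also have "\<dots> = 1" using \<open>nat \<lfloor>v\<rfloor> < 2 ^ n\<close> by simp
  finally show ?thesis using True by simp
next
  case False
  then have "\<And>k. k < 2 ^ n \<Longrightarrow> p \<notin> Ek n k" using Ek_char by blast
  then show ?thesis using False by simp
qed

lemma sum_ind_D: "(\<Sum>k<2 ^ n. indicator (Dk n k) z) = (indicator Msp z :: real)"
proof (cases "z \<in> Msp")
  case True
  define J where "J = nat \<lfloor>2 ^ n * fst z\<rfloor>"
  have "J < 2 ^ n" unfolding J_def using True by (intro nat_floor_lt) (auto simp: Msp_def field_simps)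
  have "(\<Sum>k<2 ^ n. indicator (Dk n k) z) = (\<Sum>k<2 ^ n. (\<lambda>j. if j = J then 1 else (0::real)) (rv n k))"
    using Dk_char True by (intro sum.cong) (auto simp: indicator_def J_def)
  also have "\<dots> = (\<Sum>j<2 ^ n. if j = J then 1 else (0::real))"
    by (rule sum.reindex_bij_betw[OF rv_bij])
  also have "\<dots> = 1" using \<open>J < 2 ^ n\<close> by simp
  finally show ?thesis using True by simp
next
  case False
  then have "\<And>k. k < 2 ^ n \<Longrightarrow> z \<notin> Dk n k" using Dk_char by blast
  then show ?thesis using False by simp
qed

lemma Msp_lebesgue: "Msp \<in> sets lebesgue"
  unfolding Msp_def by (rule box_lebesgue) auto

lemma Dk_lebesgue: "Dk n k \<in> sets lebesgue"
  unfolding Dk_def by (rule box_lebesgue) auto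

lemma Rect_lebesgue: "Rect n \<in> sets lebesgue"
  unfolding Rect_def by (rule box_lebesgue) auto

lemma cov:
  fixes F G :: "real \<times> real \<Rightarrow> real"
  assumes F: "integrable (lebesgue_on Msp) F" and G: "\<And>p. p \<in> Rect n \<Longrightarrow> G p = F (Phi n p)"
  shows "integrable lebesgue (\<lambda>p. indicator (Rect n) p * G p)"
    and "integral\<^sup>L lebesgue (\<lambda>p. indicator (Rect n) p * G p) = integral\<^sup>L (lebesgue_on Msp) F"
proof -
  have F1: "integrable lebesgue (\<lambda>z. indicator Msp z * F z)"
    using F Msp_lebesgue by (simp add: integrable_restrict_space)
  define HD where "HD k z = indicator (Dk n k) z * F z" for k z
  define HE where "HE k p = indicator (Ek n k) p * G p" for k p
  have HDi: "integrable lebesgue (HD k)" if "k < 2 ^ n" for k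
  proof -
    have "Dk n k \<subseteq> Msp" using Dk_char[OF that] by auto
    then have "HD k = (\<lambda>z. indicator (Dk n k) z * (indicator Msp z * F z))"
      by (auto simp: HD_def indicator_def fun_eq_iff)
    then show ?thesis using integrable_mult_indicator[OF Dk_lebesgue F1, of n k] by simp
  qed
  have HEe: "HE k = (\<lambda>p. HD k (ak n k + p))" if "k < 2 ^ n" for k
  proof
    fix p
    show "HE k p = HD k (ak n k + p)"
    proof (cases "p \<in> Ek n k")
      case True
      then have "p \<in> Rect n" using Ek_char[OF that] by auto
      then show ?thesis using True Ek_shift[of n k p] G Phi_Ek[OF that True] by (simp add: HE_def HD_def)
    next
      case False
      then show ?thesis using Ek_shift[of n k p] by (simp add: HE_def HD_def)
    qed
  qed
  have HEi: "integrable lebesgue (HE k)" and HEint: "integral\<^sup>L lebesgue (HE k) = integral\<^sup>L lebesgue (HD k)"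
    if "k < 2 ^ n" for k
    using integrable_transl[OF HDi[OF that], of "ak n k"] HEe[OF that] by simp_all
  have eR: "(\<lambda>p. indicator (Rect n) p * G p) = (\<lambda>p. \<Sum>k<2 ^ n. HE k p)"
  proof (rule ext)
    fix p
    have "(\<Sum>k<2 ^ n. HE k p) = (\<Sum>k<2 ^ n. indicator (Ek n k) p) * G p"
      by (simp only: HE_def sum_distrib_right)
    then show "indicator (Rect n) p * G p = (\<Sum>k<2 ^ n. HE k p)" unfolding sum_ind_E by simp
  qed
  have eM: "(\<lambda>z. indicator Msp z * F z) = (\<lambda>z. \<Sum>k<2 ^ n. HD k z)"
  proof (rule ext)
    fix z
    have "(\<Sum>k<2 ^ n. HD k z) = (\<Sum>k<2 ^ n. indicator (Dk n k) z) * F z"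
      by (simp only: HD_def sum_distrib_right)
    then show "indicator Msp z * F z = (\<Sum>k<2 ^ n. HD k z)" unfolding sum_ind_D by simp
  qed
  show "integrable lebesgue (\<lambda>p. indicator (Rect n) p * G p)"
    unfolding eR by (rule Bochner_Integration.integrable_sum) (use HEi in auto)
  have "integral\<^sup>L lebesgue (\<lambda>p. indicator (Rect n) p * G p) = (\<Sum>k<2 ^ n. integral\<^sup>L lebesgue (HE k))"
    unfolding eR by (rule Bochner_Integration.integral_sum) (use HEi in auto)
  also have "\<dots> = (\<Sum>k<2 ^ n. integral\<^sup>L lebesgue (HD k))" using HEint by simp
  also have "\<dots> = integral\<^sup>L lebesgue (\<lambda>z. indicator Msp z * F z)"
    unfolding eM by (rule Bochner_Integration.integral_sum[symmetric]) (use HDi in auto)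
  also have "\<dots> = integral\<^sup>L (lebesgue_on Msp) F"
    using Msp_lebesgue by (simp add: integral_restrict_space)
  finally show "integral\<^sup>L lebesgue (\<lambda>p. indicator (Rect n) p * G p) = integral\<^sup>L (lebesgue_on Msp) F" .
qed

lemma Phi_fst_null:
  assumes B: "B \<in> null_sets (lborel :: real measure)"
  shows "\<exists>Z \<in> null_sets (lborel :: (real \<times> real) measure). {z \<in> Msp. fst (Phi_inv n z) \<in> B} \<subseteq> Z"
proof -
  define Z where "Z = (\<Union>k\<in>{..<(2::nat) ^ n}. {x. x - rv n k / 2 ^ n \<in> B} \<times> (UNIV :: real set))"
  have "Z \<in> null_sets lborel"
    unfolding Z_def
    by (intro null_sets_UN' null_Times_UNIV null_sets_translation B) auto
  moreover have "{z \<in> Msp. fst (Phi_inv n z) \<in> B} \<subseteq> Z"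
  proof
    fix z assume z: "z \<in> {z \<in> Msp. fst (Phi_inv n z) \<in> B}"
    obtain u v where uv: "Phi_inv n z = (u, v)" by (cases "Phi_inv n z")
    have p: "(u, v) \<in> Rect n" using Phi_inv_in[of z n] z uv by simp
    have k: "nat \<lfloor>v\<rfloor> < 2 ^ n" using p by (intro nat_floor_lt) (auto simp: Rect_def)
    have "z = Phi n (u, v)" using Phi_Phi_inv[of z n] z uv by simp
    then have "fst z = u + rv n (nat \<lfloor>v\<rfloor>) / 2 ^ n" using Phi_Rect[OF p] by simp
    then have "fst z - rv n (nat \<lfloor>v\<rfloor>) / 2 ^ n \<in> B" using z uv by simp
    then show "z \<in> Z" unfolding Z_def using k by (cases z) auto
  qed
  ultimately show ?thesis by blast
qed

lemma S_pre_null: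
  assumes B: "B \<in> null_sets (lborel :: real measure)"
  shows "\<exists>Z \<in> null_sets (lborel :: real measure). {u \<in> {0..<1}. (odometer ^^ k) u \<in> B} \<subseteq> Z"
proof (induction k)
  case 0
  then show ?case using B by auto
next
  case (Suc k)
  then obtain Zk where Zk: "Zk \<in> null_sets lborel" "{u \<in> {0..<1}. (odometer ^^ k) u \<in> B} \<subseteq> Zk" by blast
  define Z where "Z = (\<Union>m. {x::real. x - (1 - 3 / 2 ^ Suc m) \<in> Zk})"
  have "Z \<in> null_sets lborel" unfolding Z_def using Zk(1) by (intro null_sets_UN null_sets_translation)
  moreover have "{u \<in> {0..<1}. (odometer ^^ Suc k) u \<in> B} \<subseteq> Z"
  proof
    fix u assume u: "u \<in> {u \<in> {0..<1}. (odometer ^^ Suc k) u \<in> B}"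
    then have r: "0 \<le> odometer u" "odometer u < 1" using odometer_range[of u] by auto
    have "(odometer ^^ k) (odometer u) \<in> B" using u by (simp add: funpow_swap1)
    then have "odometer u \<in> Zk" using Zk(2) r by auto
    moreover have "odometer u = u - (1 - 3 / 2 ^ Suc (lead_ones u))" using odometer_formula[of u] u by simp
    ultimately show "u \<in> Z" unfolding Z_def by auto
  qed
  ultimately show ?case by blast
qed

lemma fub:
  fixes F :: "real \<times> real \<Rightarrow> real"
  assumes F: "integrable lebesgue F"
  shows "AE u in lborel. integrable lebesgue (\<lambda>v. F (u, v))"
    and "\<exists>\<phi>. integrable lborel \<phi> \<and> (AE u in lborel. \<phi> u = integral\<^sup>L lebesgue (\<lambda>v. F (u, v)))
             \<and> integral\<^sup>L lebesgue F = integral\<^sup>L lborel \<phi>"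
proof -
  have Fm: "F \<in> borel_measurable lebesgue" using F by simp
  obtain g where gm: "g \<in> borel_measurable lborel" and ae: "AE z in lborel. F z = g z"
    using completion_ex_borel_measurable_real[OF Fm] by blast
  have gml: "g \<in> borel_measurable lebesgue" using gm by (rule measurable_completion)
  have "integrable lebesgue g"
    using integrable_cong_AE_imp[OF F gml AE_completion[OF ae]] .
  then have gi: "integrable lborel g" using integrable_completion[OF gm] by simp
  then have gi2: "integrable (lborel \<Otimes>\<^sub>M lborel) g" unfolding lborel_prod .
  have ae2: "AE z in lborel \<Otimes>\<^sub>M lborel. F z = g z" unfolding lborel_prod using ae .
  have aeuv: "AE u in lborel. AE v in lborel. F (u, v) = g (u, v)"
    using lborel_pair.AE_pair[OF ae2] .
  have aeg: "AE u in lborel. integrable lborel (\<lambda>v. g (u, v))"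
    using lborel_pair.AE_integrable_fst'[OF gi2] .
  have sec: "integrable lebesgue (\<lambda>v. F (u, v)) \<and> integral\<^sup>L lebesgue (\<lambda>v. F (u, v)) = integral\<^sup>L lborel (\<lambda>v. g (u, v))"
    if i: "integrable lborel (\<lambda>v. g (u, v))" and e: "AE v in lborel. F (u, v) = g (u, v)" for u
  proof -
    have gu: "(\<lambda>v. g (u, v)) \<in> borel_measurable lborel" using gm by measurable
    have gul: "(\<lambda>v. g (u, v)) \<in> borel_measurable lebesgue" using gu by (rule measurable_completion)
    have il: "integrable lebesgue (\<lambda>v. g (u, v))" using i integrable_completion[OF gu] by simp
    have el: "AE v in lebesgue. g (u, v) = F (u, v)" using AE_completion[OF e] by (auto elim: AE_mp)
    have Ful: "(\<lambda>v. F (u, v)) \<in> borel_measurable lebesgue"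
      by (rule borel_measurable_AE[OF gul el])
    have "integrable lebesgue (\<lambda>v. F (u, v))" using integrable_cong_AE_imp[OF il Ful el] .
    moreover have "integral\<^sup>L lebesgue (\<lambda>v. F (u, v)) = integral\<^sup>L lebesgue (\<lambda>v. g (u, v))"
      using integral_cong_AE[OF Ful gul AE_completion[OF e]] .
    moreover have "integral\<^sup>L lebesgue (\<lambda>v. g (u, v)) = integral\<^sup>L lborel (\<lambda>v. g (u, v))"
      using integral_completion[OF gu] .
    ultimately show ?thesis by simp
  qed
  show "AE u in lborel. integrable lebesgue (\<lambda>v. F (u, v))"
    using aeuv aeg by eventually_elim (use sec in auto)
  define \<phi> where "\<phi> u = integral\<^sup>L lborel (\<lambda>v. g (u, v))" for u
  have "integrable lborel \<phi>" unfolding \<phi>_def using lborel_pair.integrable_fst'[OF gi2] .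
  moreover have "AE u in lborel. \<phi> u = integral\<^sup>L lebesgue (\<lambda>v. F (u, v))"
    using aeuv aeg unfolding \<phi>_def by eventually_elim (use sec in auto)
  moreover have "integral\<^sup>L lebesgue F = integral\<^sup>L lborel \<phi>"
  proof -
    have "integral\<^sup>L lebesgue F = integral\<^sup>L lebesgue g"
      using integral_cong_AE[OF Fm gml AE_completion[OF ae]] .
    also have "\<dots> = integral\<^sup>L lborel g" using integral_completion[OF gm] .
    also have "\<dots> = integral\<^sup>L (lborel \<Otimes>\<^sub>M lborel) g" unfolding lborel_prod ..
    also have "\<dots> = integral\<^sup>L lborel \<phi>" unfolding \<phi>_def using lborel_pair.integral_fst'[OF gi2] by simp
    finally show ?thesis .
  qed
  ultimately show "\<exists>\<phi>. integrable lborel \<phi> \<and> (AE u in lborel. \<phi> u = integral\<^sup>L lebesgue (\<lambda>v. F (u, v)))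
             \<and> integral\<^sup>L lebesgue F = integral\<^sup>L lborel \<phi>" by blast
qed

lemma chain_int:
  fixes H :: "real \<Rightarrow> real" and P :: real
  assumes P: "P > 0" and hi: "\<And>q::nat. H integrable_on {real q * P .. real (Suc q) * P}"
  shows "H integrable_on {real i * P .. real (i + d) * P} \<and>
         integral {real i * P .. real (i + d) * P} H = (\<Sum>q\<in>{i..<i+d}. integral {real q * P .. real (Suc q) * P} H)"
proof (induction d)
  case 0
  have e: "{real i * P .. real (i + 0) * P} = cbox (real i * P) (real i * P)" by simp
  show ?case unfolding e using integrable_on_refl[of H "real i * P"] integral_refl[of "real i * P" H] by simp
next
  case (Suc d)
  have le1: "real i * P \<le> real (i + d) * P" using P by (intro mult_right_mono) auto
  have le2: "real (i + d) * P \<le> real (i + Suc d) * P" using P by (intro mult_right_mono) auto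
  have h2: "H integrable_on {real (i + d) * P .. real (i + Suc d) * P}" using hi[of "i + d"] by simp
  have int: "H integrable_on {real i * P .. real (i + Suc d) * P}"
    using Henstock_Kurzweil_Integration.integrable_combine[OF le1 le2] Suc h2 by blast
  have "integral {real i * P .. real (i + Suc d) * P} H
      = integral {real i * P .. real (i + d) * P} H + integral {real (i + d) * P .. real (i + Suc d) * P} H"
    using Henstock_Kurzweil_Integration.integral_combine[OF le1 le2 int] by simp
  also have "\<dots> = (\<Sum>q\<in>{i..<i+Suc d}. integral {real q * P .. real (Suc q) * P} H)"
    using Suc by simp
  finally show ?case using int by simp
qed

lemma periodic_bound:
  fixes G :: "real \<Rightarrow> real" and P K a b :: real
  assumes P: "P > 0"
    and gi: "\<And>q::nat. G integrable_on {real q * P .. real (Suc q) * P}"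
    and ai: "\<And>q::nat. (\<lambda>x. \<bar>G x\<bar>) integrable_on {real q * P .. real (Suc q) * P}"
    and z: "\<And>q::nat. integral {real q * P .. real (Suc q) * P} G = 0"
    and bd: "\<And>q::nat. integral {real q * P .. real (Suc q) * P} (\<lambda>x. \<bar>G x\<bar>) \<le> K"
    and ab: "0 \<le> a" "a \<le> b"
  shows "G absolutely_integrable_on {a..b}"
    and "\<bar>integral {a..b} G\<bar> \<le> 2 * K"
    and "integral {a..b} (\<lambda>x. \<bar>G x\<bar>) \<le> ((b - a) / P + 2) * K"
proof -
  have K: "0 \<le> K" using bd[of 0] integral_nonneg[OF ai[of 0]] by (meson abs_ge_zero order_trans)
  define i where "i = nat \<lfloor>a / P\<rfloor>"
  define j where "j = nat \<lfloor>b / P\<rfloor>"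
  have fl: "real (nat \<lfloor>x / P\<rfloor>) * P \<le> x \<and> x < real (Suc (nat \<lfloor>x / P\<rfloor>)) * P" if "0 \<le> x" for x
  proof -
    have "0 \<le> x / P" using that P by simp
    then have e: "real (nat \<lfloor>x / P\<rfloor>) = of_int \<lfloor>x / P\<rfloor>" by simp
    have f1: "of_int \<lfloor>x / P\<rfloor> \<le> x / P" and f2: "x / P < of_int \<lfloor>x / P\<rfloor> + 1" by linarith+
    have "of_int \<lfloor>x / P\<rfloor> * P \<le> x" using f1 P by (metis pos_le_divide_eq)
    moreover have "x < (of_int \<lfloor>x / P\<rfloor> + 1) * P" using f2 P by (metis pos_divide_less_eq)
    moreover have "real (Suc (nat \<lfloor>x / P\<rfloor>)) = of_int \<lfloor>x / P\<rfloor> + 1" using e by simp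
    ultimately show ?thesis using e by (simp add: add.commute)
  qed
  have ia: "real i * P \<le> a" "a < real (Suc i) * P" using fl[of a] ab unfolding i_def by auto
  have jb: "real j * P \<le> b" "b < real (Suc j) * P" using fl[of b] ab unfolding j_def by auto
  have ij: "i \<le> j" unfolding i_def j_def using ab P by (intro nat_mono floor_mono divide_right_mono) auto
  have ch: "G integrable_on {real m * P .. real (m + d) * P} \<and>
         integral {real m * P .. real (m + d) * P} G = 0" for m d
    using chain_int[OF P gi, of m d] z by simp
  have cha: "(\<lambda>x. \<bar>G x\<bar>) integrable_on {real m * P .. real (m + d) * P} \<and>
         integral {real m * P .. real (m + d) * P} (\<lambda>x. \<bar>G x\<bar>) \<le> real d * K" for m d
  proof -
    have "(\<Sum>q\<in>{m..<m+d}. integral {real q * P .. real (Suc q) * P} (\<lambda>x. \<bar>G x\<bar>)) \<le> (\<Sum>q\<in>{m..<m+d}. K)"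
      by (rule sum_mono) (use bd in auto)
    then show ?thesis using chain_int[OF P ai, of m d] by simp
  qed
  define L where "L = real i * P"
  define R where "R = real (Suc j) * P"
  have LR: "L \<le> a" "b \<le> R" using ia jb by (auto simp: L_def R_def)
  have RR: "R = real (i + (Suc j - i)) * P" using ij by (simp add: R_def)
  have gLR: "G integrable_on {L..R}" and aLR: "(\<lambda>x. \<bar>G x\<bar>) integrable_on {L..R}"
    using ch[of i "Suc j - i"] cha[of i "Suc j - i"] unfolding RR L_def by auto
  have sub: "{c..d} \<subseteq> {L..R}" if "L \<le> c" "d \<le> R" for c d using that by auto
  have gsub: "G integrable_on {c..d}" "(\<lambda>x. \<bar>G x\<bar>) integrable_on {c..d}" if "L \<le> c" "d \<le> R" for c d
    using integrable_on_subcbox[OF gLR, of c d] integrable_on_subcbox[OF aLR, of c d] sub[OF that]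
    by (auto simp: box_real)
  show "G absolutely_integrable_on {a..b}"
    unfolding absolutely_integrable_on_def using gsub[OF LR] by simp
  have loc: "\<bar>integral {real m * P .. x} G\<bar> \<le> K"
    if m: "real m * P \<le> x" "x < real (Suc m) * P" "L \<le> real m * P" "real (Suc m) * P \<le> R" for m x
  proof -
    have "\<bar>integral {real m * P .. x} G\<bar> \<le> integral {real m * P .. x} (\<lambda>x. \<bar>G x\<bar>)"
      using integral_norm_bound_integral[OF gsub(1) gsub(2), of "real m * P" x] m by simp
    also have "\<dots> \<le> integral {real m * P .. real (Suc m) * P} (\<lambda>x. \<bar>G x\<bar>)"
      by (rule integral_subset_le) (use m gsub in auto)
    also have "\<dots> \<le> K" by (rule bd)
    finally show ?thesis .
  qed
  have mono: "real m * P \<le> real m' * P" if "m \<le> m'" for m m' using P that by (simp add: mult_right_mono)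
  have Lb: "integral {L..b} G = integral {real j * P .. b} G"
  proof -
    have jj: "real j * P = real (i + (j - i)) * P" using ij by simp
    have "integral {L..b} G = integral {L .. real j * P} G + integral {real j * P .. b} G"
      by (rule Henstock_Kurzweil_Integration.integral_combine[symmetric])
        (use mono[OF ij] jb LR gsub in \<open>auto simp: L_def\<close>)
    moreover have "integral {L .. real j * P} G = 0" using ch[of i "j - i"] unfolding jj L_def by simp
    ultimately show ?thesis by simp
  qed
  have "integral {L..b} G = integral {L..a} G + integral {a..b} G"
    by (rule Henstock_Kurzweil_Integration.integral_combine[symmetric]) (use ab LR gsub in auto)
  then have "integral {a..b} G = integral {real j * P .. b} G - integral {real i * P .. a} G"
    using Lb by (simp add: L_def)
  moreover have "\<bar>integral {real j * P .. b} G\<bar> \<le> K"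
    by (rule loc) (use jb mono[OF ij] in \<open>auto simp: L_def R_def\<close>)
  moreover have "\<bar>integral {real i * P .. a} G\<bar> \<le> K"
  proof (rule loc)
    show "real (Suc i) * P \<le> R" unfolding R_def using ij by (intro mono) simp
  qed (use ia in \<open>auto simp: L_def\<close>)
  ultimately show "\<bar>integral {a..b} G\<bar> \<le> 2 * K" by linarith
  have "integral {a..b} (\<lambda>x. \<bar>G x\<bar>) \<le> integral {L..R} (\<lambda>x. \<bar>G x\<bar>)"
    by (rule integral_subset_le) (use LR gsub in auto)
  also have "\<dots> \<le> real (Suc j - i) * K" using cha[of i "Suc j - i"] unfolding RR L_def by simp
  also have "\<dots> \<le> ((b - a) / P + 2) * K"
  proof (rule mult_right_mono[OF _ K])
    have "real (Suc j - i) = real j + 1 - real i" using ij by simp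
    moreover have "real j \<le> b / P" using jb P by (simp add: field_simps)
    moreover have "a / P < real i + 1" using ia P by (simp add: field_simps)
    moreover have "(b - a) / P = b / P - a / P" by (simp add: diff_divide_distrib)
    ultimately show "real (Suc j - i) \<le> (b - a) / P + 2" by linarith
  qed
  finally show "integral {a..b} (\<lambda>x. \<bar>G x\<bar>) \<le> ((b - a) / P + 2) * K" .
qed

lemma absint_lebesgue_on:
  fixes h :: "real \<Rightarrow> real"
  assumes S: "S \<in> sets lebesgue" and h: "h absolutely_integrable_on S"
  shows "integrable (lebesgue_on S) h" "integral\<^sup>L (lebesgue_on S) h = integral S h"
proof -
  show i: "integrable (lebesgue_on S) h"
    using h S unfolding set_integrable_def by (simp add: integrable_restrict_space)
  show "integral\<^sup>L (lebesgue_on S) h = integral S h"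
    by (rule lebesgue_integral_eq_integral[OF i S])
qed

lemma lebesgue_on_absint:
  fixes h :: "real \<Rightarrow> real"
  assumes S: "S \<in> sets lebesgue" and h: "integrable (lebesgue_on S) h"
  shows "h absolutely_integrable_on S"
  using h S unfolding set_integrable_def by (simp add: integrable_restrict_space)

lemma period_facts:
  fixes h :: "real \<Rightarrow> real" and P :: real
  assumes P: "P > 0" and h: "h absolutely_integrable_on {0..<P}"
  shows "(h has_integral integral {0..<P} h) {0..P}"
    and "((\<lambda>r. \<bar>h r\<bar>) has_integral integral {0..<P} (\<lambda>r. \<bar>h r\<bar>)) {0..P}"
proof -
  have i1: "h integrable_on {0..<P}" and i2: "(\<lambda>r. \<bar>h r\<bar>) integrable_on {0..<P}"
    using h unfolding absolutely_integrable_on_def by auto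
  have neg: "negligible {x \<in> A - B. F x \<noteq> 0}" if "A - B \<subseteq> {P}" for A B and F :: "real \<Rightarrow> real"
    by (rule negligible_subset[of "{P}"]) (use that in auto)
  have d1: "{0..<P} - {0..P} \<subseteq> {P}" "{0..P} - {0..<P} \<subseteq> {P}" by auto
  show "(h has_integral integral {0..<P} h) {0..P}"
    using has_integral_spike_set_eq[OF neg[OF d1(1)] neg[OF d1(2)]] has_integral_integral[of h "{0..<P}"] i1
    by blast
  show "((\<lambda>r. \<bar>h r\<bar>) has_integral integral {0..<P} (\<lambda>r. \<bar>h r\<bar>)) {0..P}"
    using has_integral_spike_set_eq[OF neg[OF d1(1)] neg[OF d1(2)]] has_integral_integral[of "\<lambda>r. \<bar>h r\<bar>" "{0..<P}"] i2
    by blast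
qed

lemma shift_period:
  fixes H f :: "real \<Rightarrow> real" and c P y :: real
  assumes f: "(f has_integral y) {0..P}" and e: "\<And>w. w \<in> {c..<c+P} \<Longrightarrow> H w = f (w - c)"
  shows "(H has_integral y) {c..c+P}"
proof -
  have "(((\<lambda>w. f (w - c)) \<circ> (+) c) has_integral y) {0..P}"
    using f by (simp add: o_def)
  then have "((\<lambda>w. f (w - c)) has_integral y) {0+c..P+c}"
    using has_integral_shift_Icc_real by blast
  then have "((\<lambda>w. f (w - c)) has_integral y) {c..c+P}" by (simp add: add.commute)
  then show ?thesis
    by (rule has_integral_spike_finite[where S="{c+P}", rotated 2]) (use e in auto)
qed

lemma traj:
  fixes h :: "real \<times> real \<Rightarrow> real" and n :: nat and u v t K :: real
  assumes u: "0 \<le> u" "u < 1 / 2 ^ n"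
    and good: "\<And>q. integrable lebesgue (\<lambda>r. indicator (Rect n) ((odometer ^^ (q * 2 ^ n)) u, r) * h ((odometer ^^ (q * 2 ^ n)) u, r))"
    and zm: "\<And>u'. u' \<in> {0..<1 / 2 ^ n} \<Longrightarrow> integral\<^sup>L (lebesgue_on {0..<2 ^ n}) (\<lambda>r. h (u', r)) = 0"
    and nb: "\<And>u'. u' \<in> {0..<1 / 2 ^ n} \<Longrightarrow> integral\<^sup>L (lebesgue_on {0..<2 ^ n}) (\<lambda>r. \<bar>h (u', r)\<bar>) \<le> K"
    and v: "0 \<le> v" and t: "0 \<le> t"
  defines "g \<equiv> \<lambda>s. h ((odometer ^^ (nat \<lfloor>(v + s) / 2 ^ n\<rfloor> * 2 ^ n)) u, v + s - real (nat \<lfloor>(v + s) / 2 ^ n\<rfloor>) * 2 ^ n)"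
  shows "g absolutely_integrable_on {0..t}"
    and "\<bar>integral {0..t} g\<bar> \<le> 2 * K"
    and "integral {0..t} (\<lambda>s. \<bar>g s\<bar>) \<le> (t / 2 ^ n + 2) * K"
proof -
  define P :: real where "P = 2 ^ n"
  have P: "P > 0" by (simp add: P_def)
  define uq where "uq q = (odometer ^^ (q * 2 ^ n)) u" for q
  have uq: "uq q \<in> {0..<1 / 2 ^ n}" for q using S_tower_range[OF u, of q] by (simp add: uq_def)
  define hq where "hq q r = h (uq q, r)" for q r
  have Sl: "{0..<P} \<in> sets lebesgue" by simp
  have ai: "hq q absolutely_integrable_on {0..<P}" for q
  proof -
    have "(\<lambda>r. indicator (Rect n) (uq q, r) * h (uq q, r)) = (\<lambda>r. indicator {0..<P} r *\<^sub>R hq q r)"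
      using uq[of q] by (auto simp: Rect_def P_def hq_def indicator_def fun_eq_iff)
    then show ?thesis using good[of q] unfolding set_integrable_def uq_def by simp
  qed
  have zq: "integral {0..<P} (hq q) = 0" for q
  proof -
    have e: "(\<lambda>r. h (uq q, r)) = hq q" by (simp add: hq_def fun_eq_iff)
    show ?thesis using absint_lebesgue_on[OF Sl ai[of q]] zm[OF uq[of q]] unfolding e by (simp add: P_def)
  qed
  have kq: "integral {0..<P} (\<lambda>r. \<bar>hq q r\<bar>) \<le> K" for q
  proof -
    have "integrable (lebesgue_on {0..<P}) (hq q)" using absint_lebesgue_on[OF Sl ai[of q]] by simp
    then have "integrable (lebesgue_on {0..<P}) (\<lambda>r. \<bar>hq q r\<bar>)" by (rule integrable_abs)
    then have "(\<lambda>r. \<bar>hq q r\<bar>) absolutely_integrable_on {0..<P}" by (rule lebesgue_on_absint[OF Sl])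
    from absint_lebesgue_on[OF Sl this] nb[OF uq[of q]] show ?thesis by (simp add: hq_def P_def)
  qed
  define G where "G w = h (uq (nat \<lfloor>w / P\<rfloor>), w - real (nat \<lfloor>w / P\<rfloor>) * P)" for w
  have Gq: "G w = hq q (w - real q * P)" if "w \<in> {real q * P..<real q * P + P}" for q w
  proof -
    have "real q \<le> w / P" "w / P < real q + 1" using that P by (auto simp: field_simps)
    then have "\<lfloor>w / P\<rfloor> = int q" by (simp add: floor_eq_iff)
    then have "nat \<lfloor>w / P\<rfloor> = q" by simp
    then show ?thesis by (simp add: G_def hq_def)
  qed
  have SP: "real (Suc q) * P = real q * P + P" for q by (simp add: algebra_simps)
  have G0: "(G has_integral 0) {real q * P .. real (Suc q) * P}" for q
    unfolding SP using shift_period[OF period_facts(1)[OF P ai[of q]], of "real q * P" G] Gq zq by simp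
  have Ga: "((\<lambda>w. \<bar>G w\<bar>) has_integral integral {0..<P} (\<lambda>r. \<bar>hq q r\<bar>)) {real q * P .. real (Suc q) * P}" for q
    unfolding SP using shift_period[OF period_facts(2)[OF P ai[of q]], of "real q * P" "\<lambda>w. \<bar>G w\<bar>"] Gq by simp
  have pb: "G absolutely_integrable_on {v..v+t}" "\<bar>integral {v..v+t} G\<bar> \<le> 2 * K"
    "integral {v..v+t} (\<lambda>x. \<bar>G x\<bar>) \<le> ((v + t - v) / P + 2) * K"
    using periodic_bound[OF P, of G K v "v + t"] G0 Ga kq v t by (auto simp: has_integral_iff)
  have gG: "g = G \<circ> (+) v" by (simp add: g_def G_def uq_def P_def fun_eq_iff o_def)
  have agG: "(\<lambda>s. \<bar>g s\<bar>) = (\<lambda>w. \<bar>G w\<bar>) \<circ> (+) v" by (simp add: gG o_def fun_eq_iff)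
  have i1: "G integrable_on {v..v+t}" and i2: "(\<lambda>w. \<bar>G w\<bar>) integrable_on {v..v+t}"
    using pb(1) unfolding absolutely_integrable_on_def by auto
  have h1: "(g has_integral integral {v..v+t} G) {0..t}"
    unfolding gG has_integral_shift_Icc_real using i1 by (simp add: add.commute has_integral_integral)
  have h2: "((\<lambda>s. \<bar>g s\<bar>) has_integral integral {v..v+t} (\<lambda>w. \<bar>G w\<bar>)) {0..t}"
    unfolding agG has_integral_shift_Icc_real using i2 by (simp add: add.commute has_integral_integral)
  show "g absolutely_integrable_on {0..t}"
    unfolding absolutely_integrable_on_def using h1 h2 by auto
  show "\<bar>integral {0..t} g\<bar> \<le> 2 * K" using h1 pb(2) by (simp add: integral_unique)
  show "integral {0..t} (\<lambda>s. \<bar>g s\<bar>) \<le> (t / 2 ^ n + 2) * K" using h2 pb(3) by (simp add: integral_unique P_def)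
qed

lemma AE_summable_norm:
  fixes f :: "nat \<Rightarrow> 'a \<Rightarrow> real"
  assumes fi: "\<And>i. integrable M (f i)" and s: "summable (\<lambda>i. \<integral>x. norm (f i x) \<partial>M)"
  shows "AE x in M. summable (\<lambda>i. norm (f i x))"
proof -
  have m[measurable]: "f i \<in> borel_measurable M" for i using fi by simp
  have "(\<integral>\<^sup>+x. (\<Sum>i. ennreal (norm (f i x))) \<partial>M) = (\<Sum>i. \<integral>\<^sup>+x. ennreal (norm (f i x)) \<partial>M)"
    by (rule nn_integral_suminf) measurable
  also have "\<dots> = (\<Sum>i. ennreal (\<integral>x. norm (f i x) \<partial>M))"
    using fi by (intro suminf_cong nn_integral_eq_integral) auto
  also have "\<dots> = ennreal (\<Sum>i. \<integral>x. norm (f i x) \<partial>M)"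
    using s by (intro suminf_ennreal2) auto
  finally have "(\<integral>\<^sup>+x. (\<Sum>i. ennreal (norm (f i x))) \<partial>M) \<noteq> \<infinity>" by simp
  then have "AE x in M. (\<Sum>i. ennreal (norm (f i x))) \<noteq> \<infinity>"
    by (intro nn_integral_PInf_AE) measurable
  then show ?thesis
    by eventually_elim (rule summable_suminf_not_top, auto)
qed

lemma enn_sum_real:
  fixes a :: "nat \<Rightarrow> ennreal"
  assumes A: "(\<Sum>i. a i) < \<infinity>"
  shows "a i < \<infinity>" "summable (\<lambda>i. enn2real (a i))" "enn2real (\<Sum>i. a i) = (\<Sum>i. enn2real (a i))"
proof -
  show fin: "a i < \<infinity>" for i using ennreal_suminf_lessD[OF A] .
  have e: "ennreal (enn2real (a i)) = a i" for i using fin[of i] by (simp add: ennreal_enn2real_if)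
  have "(\<Sum>i. ennreal (enn2real (a i))) \<noteq> top" using A unfolding e by simp
  then show s: "summable (\<lambda>i. enn2real (a i))" using summable_suminf_not_top[of "\<lambda>i. enn2real (a i)"] by simp
  have "(\<Sum>i. ennreal (enn2real (a i))) = ennreal (\<Sum>i. enn2real (a i))"
    using s by (intro suminf_ennreal2) auto
  then show "enn2real (\<Sum>i. a i) = (\<Sum>i. enn2real (a i))" unfolding e
    by (simp add: sum_nonneg suminf_nonneg[OF s])
qed

lemma sec_bound:
  fixes h :: "real \<times> real \<Rightarrow> real"
  assumes fin: "norm_inf_1 n h < \<infinity>" and u: "u \<in> {0..<1 / 2 ^ n}"
  shows "integral\<^sup>L (lebesgue_on {0..<2 ^ n}) (\<lambda>r. \<bar>h (u, r)\<bar>) \<le> enn2real (norm_inf_1 n h)"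
proof (cases "integrable (lebesgue_on {0..<2 ^ n}) (\<lambda>r. \<bar>h (u, r)\<bar>)")
  case True
  then have "integral\<^sup>L (lebesgue_on {0..<2 ^ n}) (\<lambda>r. \<bar>h (u, r)\<bar>)
      = enn2real (\<integral>\<^sup>+ r. ennreal \<bar>h (u, r)\<bar> \<partial>(lebesgue_on {0..<2 ^ n}))"
    by (intro integral_eq_nn_integral) auto
  also have "\<dots> \<le> enn2real (norm_inf_1 n h)"
  proof (rule enn2real_mono)
    show "(\<integral>\<^sup>+ r. ennreal \<bar>h (u, r)\<bar> \<partial>(lebesgue_on {0..<2 ^ n})) \<le> norm_inf_1 n h"
      unfolding norm_inf_1_def using u by (rule SUP_upper)
  qed (use fin in auto)
  finally show ?thesis .
next
  case False
  then show ?thesis by (simp add: not_integrable_integral_eq)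
qed

lemma restrict_indicator_integral:
  fixes g :: "real \<Rightarrow> real"
  shows "integral\<^sup>L lebesgue (\<lambda>v. indicator {0..<c} v * g v) = integral\<^sup>L (lebesgue_on {0..<c}) g"
  by (simp add: integral_restrict_space)

lemma per_n:
  fixes h :: "real \<times> real \<Rightarrow> real"
  assumes L1: "integrable (lebesgue_on Msp) (\<lambda>z. h (Phi_inv n z))"
    and zm: "\<And>u. u \<in> {0..<1 / 2 ^ n} \<Longrightarrow> integral\<^sup>L (lebesgue_on {0..<2 ^ n}) (\<lambda>v. h (u, v)) = 0"
    and fin: "norm_inf_1 n h < \<infinity>"
  shows "integral\<^sup>L (lebesgue_on Msp) (\<lambda>z. h (Phi_inv n z)) = 0"
    and "integral\<^sup>L (lebesgue_on Msp) (\<lambda>z. \<bar>h (Phi_inv n z)\<bar>) \<le> enn2real (norm_inf_1 n h)"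
    and "AE u in lborel. integrable lebesgue (\<lambda>v. indicator (Rect n) (u, v) * h (u, v))"
proof -
  define H where "H p = indicator (Rect n) p * h p" for p
  have cH: "integrable lebesgue H" "integral\<^sup>L lebesgue H = integral\<^sup>L (lebesgue_on Msp) (\<lambda>z. h (Phi_inv n z))"
    using cov[OF L1, of n h] Phi_inv_Phi unfolding H_def by auto
  show "AE u in lborel. integrable lebesgue (\<lambda>v. indicator (Rect n) (u, v) * h (u, v))"
    using fub(1)[OF cH(1)] unfolding H_def .
  have Rsec: "indicator (Rect n) (u, v) = (if u \<in> {0..<1 / 2 ^ n} then indicator {0..<2 ^ n} v else (0::real))" for u v
    by (auto simp: Rect_def indicator_def)
  obtain \<phi> where \<phi>: "integrable lborel \<phi>" "AE u in lborel. \<phi> u = integral\<^sup>L lebesgue (\<lambda>v. H (u, v))"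
    "integral\<^sup>L lebesgue H = integral\<^sup>L lborel \<phi>"
    using fub(2)[OF cH(1)] by blast
  have "integral\<^sup>L lebesgue (\<lambda>v. H (u, v)) = 0" for u
  proof (cases "u \<in> {0..<1 / 2 ^ n}")
    case True
    then have "(\<lambda>v. H (u, v)) = (\<lambda>v. indicator {0..<2 ^ n} v * h (u, v))"
      by (simp add: H_def Rsec fun_eq_iff)
    then show ?thesis using zm[OF True] by (simp add: restrict_indicator_integral)
  next
    case False
    then have z: "(\<lambda>v. H (u, v)) = (\<lambda>v. 0)" by (auto simp: H_def Rsec fun_eq_iff)
    show ?thesis unfolding z by simp
  qed
  note zz = this
  have "AE u in lborel. \<phi> u = 0" using \<phi>(2) by eventually_elim (use zz in simp)
  then have "integral\<^sup>L lborel \<phi> = 0" by (rule integral_eq_zero_AE)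
  then show "integral\<^sup>L (lebesgue_on Msp) (\<lambda>z. h (Phi_inv n z)) = 0" using cH(2) \<phi>(3) by simp
  define H' where "H' p = indicator (Rect n) p * \<bar>h p\<bar>" for p
  have L1a: "integrable (lebesgue_on Msp) (\<lambda>z. \<bar>h (Phi_inv n z)\<bar>)" using integrable_abs[OF L1] .
  have cH': "integrable lebesgue H'" "integral\<^sup>L lebesgue H' = integral\<^sup>L (lebesgue_on Msp) (\<lambda>z. \<bar>h (Phi_inv n z)\<bar>)"
    using cov[OF L1a, of n "\<lambda>p. \<bar>h p\<bar>"] Phi_inv_Phi unfolding H'_def by auto
  obtain \<psi> where \<psi>: "integrable lborel \<psi>" "AE u in lborel. \<psi> u = integral\<^sup>L lebesgue (\<lambda>v. H' (u, v))"
    "integral\<^sup>L lebesgue H' = integral\<^sup>L lborel \<psi>"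
    using fub(2)[OF cH'(1)] by blast
  define K where "K = enn2real (norm_inf_1 n h)"
  have K0: "0 \<le> K" by (simp add: K_def)
  have "integral\<^sup>L lebesgue (\<lambda>v. H' (u, v)) \<le> K * indicator {0..1} u" for u
  proof (cases "u \<in> {0..<1 / 2 ^ n}")
    case True
    then have "(\<lambda>v. H' (u, v)) = (\<lambda>v. indicator {0..<2 ^ n} v * \<bar>h (u, v)\<bar>)"
      by (simp add: H'_def Rsec fun_eq_iff)
    moreover have "u \<in> {0..1}"
    proof -
      have a: "1 / (2::real) ^ n \<le> 1" by simp
      have b: "u < 1 / 2 ^ n" "0 \<le> u" using True by auto
      have "u \<le> 1" using a b by linarith
      then show ?thesis using b by simp
    qed
    ultimately show ?thesis using sec_bound[OF fin True] by (simp add: restrict_indicator_integral K_def)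
  next
    case False
    then have z: "(\<lambda>v. H' (u, v)) = (\<lambda>v. 0)" by (auto simp: H'_def Rsec fun_eq_iff)
    show ?thesis unfolding z using K0 by simp
  qed
  note bd = this
  have "AE u in lborel. \<psi> u \<le> K * indicator {0..1} u" using \<psi>(2) by eventually_elim (use bd in simp)
  note aeb = this
  have ig: "integrable lborel (\<lambda>u. K * indicator {0..1::real} u)"
    by (intro integrable_mult_right integrable_real_indicator) auto
  have "integral\<^sup>L lborel \<psi> \<le> integral\<^sup>L lborel (\<lambda>u::real. K * indicator {0..1} u)"
    using integral_mono_AE[OF \<psi>(1) ig aeb] .
  also have "\<dots> = K" by simp
  finally show "integral\<^sup>L (lebesgue_on Msp) (\<lambda>z. \<bar>h (Phi_inv n z)\<bar>) \<le> enn2real (norm_inf_1 n h)"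
    using cH'(2) \<psi>(3) by (simp add: K_def)
qed

lemma determ:
  fixes fs :: "nat \<Rightarrow> real \<times> real \<Rightarrow> real" and f :: "real \<times> real \<Rightarrow> real" and Kr :: "nat \<Rightarrow> real"
  assumes zero_mean: "\<And>n u. n \<ge> 1 \<Longrightarrow> u \<in> {0..<1 / 2 ^ n} \<Longrightarrow>
          integral\<^sup>L (lebesgue_on {0..<2 ^ n}) (\<lambda>v. fs n (u, v)) = 0"
    and f_def: "\<And>z. f z = (\<Sum>n. fs (Suc n) (Phi_inv (Suc n) z))"
    and fin: "\<And>i. norm_inf_1 (Suc i) (fs (Suc i)) < \<infinity>"
    and Kr: "\<And>i. Kr i = enn2real (norm_inf_1 (Suc i) (fs (Suc i)))"
    and Ks: "summable Kr"
    and t: "t > 0" and z: "z \<in> Msp"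
    and goods: "\<And>i q. integrable lebesgue (\<lambda>v. indicator (Rect (Suc i)) ((odometer ^^ (q * 2 ^ Suc i)) (fst (Phi_inv (Suc i) z)), v)
                    * fs (Suc i) ((odometer ^^ (q * 2 ^ Suc i)) (fst (Phi_inv (Suc i) z)), v))"
  shows "integrable (lebesgue_on {0..t}) (\<lambda>s. f (flow s z)) \<and> \<bar>birkhoff_avg f t z\<bar> \<le> 2 * (\<Sum>i. Kr i) / t"
proof -
  define gi where "gi i s = fs (Suc i) (Phi_inv (Suc i) (flow s z))" for i s
  have K0: "0 \<le> Kr i" for i by (simp add: Kr)
  have Sl: "{0..t} \<in> sets lebesgue" by simp
  have one: "integrable (lebesgue_on {0..t}) (gi i) \<and> \<bar>integral\<^sup>L (lebesgue_on {0..t}) (gi i)\<bar> \<le> 2 * Kr i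
      \<and> integral\<^sup>L (lebesgue_on {0..t}) (\<lambda>s. norm (gi i s)) \<le> (t + 2) * Kr i" for i
  proof -
    define n where "n = Suc i"
    obtain u v where uv: "Phi_inv n z = (u, v)" by (cases "Phi_inv n z")
    have p: "(u, v) \<in> Rect n" using Phi_inv_in[of z n] z uv by simp
    have b: "0 \<le> u" "u < 1 / 2 ^ n" "0 \<le> v" "v < 2 ^ n" using p by (auto simp: Rect_def)
    define g where "g s = fs n ((odometer ^^ (nat \<lfloor>(v + s) / 2 ^ n\<rfloor> * 2 ^ n)) u, v + s - real (nat \<lfloor>(v + s) / 2 ^ n\<rfloor>) * 2 ^ n)" for s
    have hg: "integrable lebesgue (\<lambda>r. indicator (Rect n) ((odometer ^^ (q * 2 ^ n)) u, r) * fs n ((odometer ^^ (q * 2 ^ n)) u, r))" for q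
      using goods[of i q] uv unfolding n_def by simp
    have hz: "integral\<^sup>L (lebesgue_on {0..<2 ^ n}) (\<lambda>r. fs n (u', r)) = 0" if "u' \<in> {0..<1 / 2 ^ n}" for u'
      using zero_mean[of n u'] that unfolding n_def by simp
    have hn: "integral\<^sup>L (lebesgue_on {0..<2 ^ n}) (\<lambda>r. \<bar>fs n (u', r)\<bar>) \<le> Kr i" if "u' \<in> {0..<1 / 2 ^ n}" for u'
      using sec_bound[OF fin[of i], of u'] that Kr[of i] unfolding n_def by simp
    have t0: "0 \<le> t" using t by simp
    have gd: "g = (\<lambda>s. fs n ((odometer ^^ (nat \<lfloor>(v + s) / 2 ^ n\<rfloor> * 2 ^ n)) u, v + s - real (nat \<lfloor>(v + s) / 2 ^ n\<rfloor>) * 2 ^ n))"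
      by (simp add: g_def fun_eq_iff)
    note tr0 = traj[OF b(1,2) hg hz hn b(3) t0]
    have tr: "g absolutely_integrable_on {0..t}" "\<bar>integral {0..t} g\<bar> \<le> 2 * Kr i"
      "integral {0..t} (\<lambda>s. \<bar>g s\<bar>) \<le> (t / 2 ^ n + 2) * Kr i"
      using tr0 unfolding gd by auto
    have geq: "gi i s = g s" if "s \<in> {0..t}" for s
      using flow_Phi[OF z _ uv, of s] that unfolding gi_def g_def n_def by simp
    have gL: "integrable (lebesgue_on {0..t}) g" "integral\<^sup>L (lebesgue_on {0..t}) g = integral {0..t} g"
      using absint_lebesgue_on[OF Sl tr(1)] by auto
    have gaL: "integrable (lebesgue_on {0..t}) (\<lambda>s. \<bar>g s\<bar>)" using integrable_abs[OF gL(1)] .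
    have "integral\<^sup>L (lebesgue_on {0..t}) (\<lambda>s. \<bar>g s\<bar>) = integral {0..t} (\<lambda>s. \<bar>g s\<bar>)"
      using absint_lebesgue_on[OF Sl lebesgue_on_absint[OF Sl gaL]] by simp
    also have "\<dots> \<le> (t / 2 ^ n + 2) * Kr i" by (rule tr(3))
    also have "\<dots> \<le> (t + 2) * Kr i"
    proof (rule mult_right_mono[OF _ K0])
      have "t / 2 ^ n \<le> t" using t by (simp add: divide_le_eq)
      then show "t / 2 ^ n + 2 \<le> t + 2" by simp
    qed
    finally have gn: "integral\<^sup>L (lebesgue_on {0..t}) (\<lambda>s. \<bar>g s\<bar>) \<le> (t + 2) * Kr i" .
    have c1: "integrable (lebesgue_on {0..t}) (gi i) = integrable (lebesgue_on {0..t}) g"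
      by (rule Bochner_Integration.integrable_cong) (auto simp: geq)
    have c2: "integral\<^sup>L (lebesgue_on {0..t}) (gi i) = integral\<^sup>L (lebesgue_on {0..t}) g"
      by (rule Bochner_Integration.integral_cong) (auto simp: geq)
    have c3: "integral\<^sup>L (lebesgue_on {0..t}) (\<lambda>s. norm (gi i s)) = integral\<^sup>L (lebesgue_on {0..t}) (\<lambda>s. \<bar>g s\<bar>)"
      by (rule Bochner_Integration.integral_cong) (auto simp: geq)
    show ?thesis using c1 c2 c3 gL tr(2) gn by simp
  qed
  have gI: "integrable (lebesgue_on {0..t}) (gi i)" for i using one by blast
  have sN: "summable (\<lambda>i. integral\<^sup>L (lebesgue_on {0..t}) (\<lambda>s. norm (gi i s)))"
  proof (rule summable_comparison_test[where g="\<lambda>i. (t + 2) * Kr i"])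
    show "\<exists>N. \<forall>n\<ge>N. norm (integral\<^sup>L (lebesgue_on {0..t}) (\<lambda>s. norm (gi n s))) \<le> (t + 2) * Kr n"
      using one by (auto intro!: exI[of _ 0] simp: integral_nonneg_AE)
    show "summable (\<lambda>i. (t + 2) * Kr i)" using Ks by (rule summable_mult)
  qed
  have aeS: "AE s in lebesgue_on {0..t}. summable (\<lambda>i. norm (gi i s))"
    by (rule AE_summable_norm[OF gI sN])
  have fe: "(\<lambda>s. f (flow s z)) = (\<lambda>s. \<Sum>i. gi i s)" by (simp add: f_def gi_def fun_eq_iff)
  have I: "integrable (lebesgue_on {0..t}) (\<lambda>s. f (flow s z))"
    unfolding fe by (rule integrable_suminf[OF gI aeS sN])
  have Ie: "integral\<^sup>L (lebesgue_on {0..t}) (\<lambda>s. f (flow s z)) = (\<Sum>i. integral\<^sup>L (lebesgue_on {0..t}) (gi i))"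
    unfolding fe by (rule integral_suminf[OF gI aeS sN])
  have sabs: "summable (\<lambda>i. \<bar>integral\<^sup>L (lebesgue_on {0..t}) (gi i)\<bar>)"
  proof (rule summable_comparison_test[where g="\<lambda>i. 2 * Kr i"])
    show "\<exists>N. \<forall>n\<ge>N. norm \<bar>integral\<^sup>L (lebesgue_on {0..t}) (gi n)\<bar> \<le> 2 * Kr n"
      using one by auto
    show "summable (\<lambda>i. 2 * Kr i)" using Ks by (rule summable_mult)
  qed
  have "\<bar>integral\<^sup>L (lebesgue_on {0..t}) (\<lambda>s. f (flow s z))\<bar> \<le> (\<Sum>i. \<bar>integral\<^sup>L (lebesgue_on {0..t}) (gi i)\<bar>)"
    unfolding Ie by (rule summable_rabs[OF sabs])
  also have "\<dots> \<le> (\<Sum>i. 2 * Kr i)"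
    by (rule suminf_le[OF _ sabs summable_mult[OF Ks]]) (use one in auto)
  also have "\<dots> = 2 * (\<Sum>i. Kr i)" by (rule suminf_mult[OF Ks])
  finally have "\<bar>integral\<^sup>L (lebesgue_on {0..t}) (\<lambda>s. f (flow s z))\<bar> \<le> 2 * (\<Sum>i. Kr i)" .
  then have "\<bar>birkhoff_avg f t z\<bar> \<le> 2 * (\<Sum>i. Kr i) / t"
    unfolding birkhoff_avg_def using t by (simp add: divide_right_mono)
  with I show ?thesis by simp
qed

theorem theorem1:
  fixes fs :: "nat \<Rightarrow> real \<times> real \<Rightarrow> real"
    and f :: "real \<times> real \<Rightarrow> real"
  assumes meas: "\<And>n. n \<ge> 1 \<Longrightarrow> fs n \<in> borel_measurable (lebesgue_on (Rect n))"
    and L1: "\<And>n. n \<ge> 1 \<Longrightarrow> integrable (lebesgue_on Msp) (\<lambda>z. fs n (Phi_inv n z))"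
    and zero_mean: "\<And>n u. n \<ge> 1 \<Longrightarrow> u \<in> {0..<1 / 2 ^ n} \<Longrightarrow>
          integral\<^sup>L (lebesgue_on {0..<2 ^ n}) (\<lambda>v. fs n (u, v)) = 0"
    and summ: "(\<Sum>n. norm_inf_1 (Suc n) (fs (Suc n))) < \<infinity>"
    and f_def: "\<And>z. f z = (\<Sum>n. fs (Suc n) (Phi_inv (Suc n) z))"
  shows "integrable (lebesgue_on Msp) f
         \<and> integral\<^sup>L (lebesgue_on Msp) f = 0
         \<and> (\<forall>t>0. AE z in lebesgue_on Msp.
              integrable (lebesgue_on {0..t}) (\<lambda>s. f (flow s z))
              \<and> \<bar>birkhoff_avg f t z\<bar>
                  \<le> 2 * enn2real (\<Sum>n. norm_inf_1 (Suc n) (fs (Suc n))) / t)"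
proof -
  define a where "a i = norm_inf_1 (Suc i) (fs (Suc i))" for i
  have sa: "(\<Sum>i. a i) < \<infinity>" using summ unfolding a_def .
  define Kr where "Kr i = enn2real (a i)" for i
  have fin: "norm_inf_1 (Suc i) (fs (Suc i)) < \<infinity>" for i using enn_sum_real(1)[OF sa] unfolding a_def .
  have Ks: "summable Kr" using enn_sum_real(2)[OF sa] unfolding Kr_def .
  have KC: "enn2real (\<Sum>n. norm_inf_1 (Suc n) (fs (Suc n))) = (\<Sum>i. Kr i)"
    using enn_sum_real(3)[OF sa] unfolding Kr_def a_def .
  have Kr: "Kr i = enn2real (norm_inf_1 (Suc i) (fs (Suc i)))" for i by (simp add: Kr_def a_def)
  define F where "F i z = fs (Suc i) (Phi_inv (Suc i) z)" for i z
  have L1S: "integrable (lebesgue_on Msp) (\<lambda>z. fs (Suc i) (Phi_inv (Suc i) z))" for i using L1 by simp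
  have zmS: "integral\<^sup>L (lebesgue_on {0..<2 ^ Suc i}) (\<lambda>v. fs (Suc i) (u, v)) = 0"
    if "u \<in> {0..<1 / 2 ^ Suc i}" for i u using zero_mean[of "Suc i" u] that by simp
  have FI: "integrable (lebesgue_on Msp) (F i)" for i using L1S unfolding F_def .
  have F0: "integral\<^sup>L (lebesgue_on Msp) (F i) = 0" for i
    using per_n(1)[OF L1S zmS fin] unfolding F_def by simp
  have Fb: "integral\<^sup>L (lebesgue_on Msp) (\<lambda>z. norm (F i z)) \<le> Kr i" for i
    using per_n(2)[OF L1S zmS fin] unfolding F_def Kr by simp
  have Fae: "AE u in lborel. integrable lebesgue (\<lambda>v. indicator (Rect (Suc i)) (u, v) * fs (Suc i) (u, v))" for i
    using per_n(3)[OF L1S zmS fin] .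
  have sumFn: "summable (\<lambda>i. integral\<^sup>L (lebesgue_on Msp) (\<lambda>z. norm (F i z)))"
  proof (rule summable_comparison_test[OF _ Ks])
    show "\<exists>N. \<forall>n\<ge>N. norm (integral\<^sup>L (lebesgue_on Msp) (\<lambda>z. norm (F n z))) \<le> Kr n"
      using Fb by (auto intro!: exI[of _ 0] simp: integral_nonneg_AE)
  qed
  have aeF: "AE z in lebesgue_on Msp. summable (\<lambda>i. norm (F i z))" by (rule AE_summable_norm[OF FI sumFn])
  have fe: "f = (\<lambda>z. \<Sum>i. F i z)" using f_def unfolding F_def by (simp add: fun_eq_iff)
  have P1: "integrable (lebesgue_on Msp) f" unfolding fe by (rule integrable_suminf[OF FI aeF sumFn])
  have P2: "integral\<^sup>L (lebesgue_on Msp) f = 0"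
    unfolding fe integral_suminf[OF FI aeF sumFn] F0 by simp
  have P3: "AE z in lebesgue_on Msp.
              integrable (lebesgue_on {0..t}) (\<lambda>s. f (flow s z))
              \<and> \<bar>birkhoff_avg f t z\<bar>
                  \<le> 2 * enn2real (\<Sum>n. norm_inf_1 (Suc n) (fs (Suc n))) / t" if t: "t > 0" for t
  proof -
    define good where "good i u \<longleftrightarrow> integrable lebesgue (\<lambda>v. indicator (Rect (Suc i)) (u, v) * fs (Suc i) (u, v))" for i u
    define BS where "BS i q = {z \<in> Msp. \<not> good i ((odometer ^^ (q * 2 ^ Suc i)) (fst (Phi_inv (Suc i) z)))}" for i q
    have ex: "\<exists>Z. Z \<in> null_sets (lborel :: (real \<times> real) measure) \<and> BS i q \<subseteq> Z" for i q
    proof -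
      obtain B where B: "B \<in> null_sets lborel" "{u \<in> space lborel. \<not> good i u} \<subseteq> B"
        using Fae[of i] unfolding eventually_ae_filter good_def by blast
      obtain Z1 where Z1: "Z1 \<in> null_sets lborel" "{u \<in> {0..<1}. (odometer ^^ (q * 2 ^ Suc i)) u \<in> B} \<subseteq> Z1"
        using S_pre_null[OF B(1)] by blast
      obtain Z2 where Z2: "Z2 \<in> null_sets lborel" "{z \<in> Msp. fst (Phi_inv (Suc i) z) \<in> Z1} \<subseteq> Z2"
        using Phi_fst_null[OF Z1(1)] by blast
      have "BS i q \<subseteq> Z2"
      proof
        fix z assume zb: "z \<in> BS i q"
        then have z: "z \<in> Msp" by (simp add: BS_def)
        define u where "u = fst (Phi_inv (Suc i) z)"
        have "Phi_inv (Suc i) z \<in> Rect (Suc i)" using Phi_inv_in[OF z] .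
        then have u: "0 \<le> u" "u < 1 / 2 ^ Suc i" by (auto simp: Rect_def u_def)
        have "(1::real) \<le> 2 ^ Suc i" by (rule one_le_power) simp
        then have le1: "1 / (2::real) ^ Suc i \<le> 1" by (simp only: divide_le_eq_1) simp
        have "u < 1" using u(2) le1 by linarith
        then have u1: "u \<in> {0..<1}" using u(1) by simp
        have "(odometer ^^ (q * 2 ^ Suc i)) u \<in> B" using zb B(2) by (auto simp: BS_def u_def)
        then have "u \<in> Z1" using Z1(2) u1 by auto
        then show "z \<in> Z2" using Z2(2) z by (auto simp: u_def)
      qed
      then show ?thesis using Z2(1) by blast
    qed
    define Zf where "Zf i q = (SOME Z. Z \<in> null_sets (lborel :: (real \<times> real) measure) \<and> BS i q \<subseteq> Z)" for i q
    have Zf: "Zf i q \<in> null_sets lborel" "BS i q \<subseteq> Zf i q" for i q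
      using someI_ex[OF ex[of i q]] unfolding Zf_def by auto
    have Zn: "(\<Union>i. \<Union>q. Zf i q) \<in> null_sets lborel" using Zf(1) by auto
    have "AE z in lborel. z \<in> Msp \<longrightarrow> (\<forall>i q. good i ((odometer ^^ (q * 2 ^ Suc i)) (fst (Phi_inv (Suc i) z))))"
    proof (rule AE_I'[OF Zn])
      show "{z \<in> space lborel. \<not> (z \<in> Msp \<longrightarrow> (\<forall>i q. good i ((odometer ^^ (q * 2 ^ Suc i)) (fst (Phi_inv (Suc i) z)))))}
          \<subseteq> (\<Union>i. \<Union>q. Zf i q)"
      proof
        fix z assume "z \<in> {z \<in> space lborel. \<not> (z \<in> Msp \<longrightarrow> (\<forall>i q. good i ((odometer ^^ (q * 2 ^ Suc i)) (fst (Phi_inv (Suc i) z)))))}"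
        then obtain i q where "z \<in> Msp" "\<not> good i ((odometer ^^ (q * 2 ^ Suc i)) (fst (Phi_inv (Suc i) z)))" by auto
        then have "z \<in> BS i q" unfolding BS_def by blast
        then have "z \<in> Zf i q" using Zf(2) by blast
        then show "z \<in> (\<Union>i. \<Union>q. Zf i q)" by blast
      qed
    qed
    then have "AE z in lebesgue. z \<in> Msp \<longrightarrow> (\<forall>i q. good i ((odometer ^^ (q * 2 ^ Suc i)) (fst (Phi_inv (Suc i) z))))"
      by (rule AE_completion)
    then have AEg: "AE z in lebesgue_on Msp. z \<in> Msp \<and> (\<forall>i q. good i ((odometer ^^ (q * 2 ^ Suc i)) (fst (Phi_inv (Suc i) z))))"
      using Msp_lebesgue by (subst AE_restrict_space_iff) auto
    show ?thesis
      using AEg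
    proof eventually_elim
      case (elim z)
      then have z: "z \<in> Msp" and g: "\<And>i q. good i ((odometer ^^ (q * 2 ^ Suc i)) (fst (Phi_inv (Suc i) z)))" by auto
      show ?case
        using determ[OF zero_mean f_def fin Kr Ks t z] g unfolding good_def KC by blast
    qed
  qed
  show ?thesis using P1 P2 P3 by blast
qed

end
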